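(* Let $S$ be a dense subsemigroup of $((0,\infty),+)$ and let $A\subseteq S$. Then $A$ is quasi-central near zero if and only if there exist a dynamical system $(X,\langle T_s\rangle_{s\in S})$, points $x,y\in X$ such that the pair $(x,y)$ is $JIUR_0$, and a neighbourhood $U$ of $y$ such that $A=\{s\in S: T_s(x)\in U\}$.
   Context: "Dense" means dense in the usual topology of $(0,\infty)$. $\beta S$ is the Stone–Čech compactification of the discrete set $S$ (ultrafilters on $S$), with $+$ extended so that $(\beta S,+)$ is a compact right topological semigroup: $A\in p+q$ iff $\{x\in S:-x+A\in q\}\in p$, where $-x+A=\{y\in S:x+y\in A\}$. $O^{+}(S)=\{p\in\beta S: S\cap(0,\epsilon)\in p\text{ for every }\epsilon>0\}$, a compact right topological subsemigroup of $\beta S$; $K(O^{+}(S))$ is its smallest two-sided ideal and $\mathrm{Cl}$ is closure in $\beta S$. A set $A\subseteq S$ is quasi-central near zero iff there is an idempotent $p\in\mathrm{Cl}\,K(O^{+}(S))$ with $A\in p$. A dynamical system $(X,\langle T_s\rangle_{s\in S})$ consists of a compact Hausdorff space $X$ and continuous maps $T_s:X\to X$ with $T_s\circ T_t=T_{s+t}$. A subset $A\subseteq S$ is piecewise syndetic near zero iff there exist sequences $\langle F_n\rangle$ and $\langle\delta_n\rangle$ such that (1) for each $n$, $F_n$ is a finite nonempty subset of $(0,\frac1n)\cap S$ and $\delta_n\in(0,\frac1n)$, and (2) for every finite nonempty $G\subseteq S$ and every $\mu>0$ there is $x\in(0,\mu)\cap S$ with $(G\cap(0,\delta_n))+x\subseteq\bigcup_{t\in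 F_n}(-t+A)$ for all $n\in\mathbb{N}$. The pair $(x,y)$ is $JIUR_0$ (jointly intermittently uniformly recurrent near zero) iff for every neighbourhood $U$ of $y$, the set $\{s\in S: T_s(x)\in U\text{ and }T_s(y)\in U\}$ is piecewise syndetic near zero. *)

theory Defs
  imports "HOL-Analysis.Analysis"
begin

definition dense_subsemigroup :: "real set \<Rightarrow> bool" where
  "dense_subsemigroup S \<longleftrightarrow>
     S \<subseteq> {0<..} \<and> (\<forall>s\<in>S. \<forall>t\<in>S. s + t \<in> S) \<and>
     (\<forall>a b. 0 < a \<and> a < b \<longrightarrow> (\<exists>s\<in>S. a < s \<and> s < b))"

definition lshift :: "real set \<Rightarrow> real \<Rightarrow> real set \<Rightarrow> real set" where
  "lshift S x A = {y\<in>S. x + y \<in> A}"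

section \<open>Stone-Cech compactification of discrete S as ultrafilters\<close>

definition is_ultrafilter :: "real set \<Rightarrow> real set set \<Rightarrow> bool" where
  "is_ultrafilter S p \<longleftrightarrow>
     p \<subseteq> Pow S \<and> S \<in> p \<and> {} \<notin> p \<and>
     (\<forall>A\<in>p. \<forall>B. A \<subseteq> B \<and> B \<subseteq> S \<longrightarrow> B \<in> p) \<and>
     (\<forall>A\<in>p. \<forall>B\<in>p. A \<inter> B \<in> p) \<and>
     (\<forall>A. A \<subseteq> S \<longrightarrow> A \<in> p \<or> S - A \<in> p)"

definition betaS :: "real set \<Rightarrow> real set set set" where
  "betaS S = {p. is_ultrafilter S p}"

definition uplus :: "real set \<Rightarrow> real set set \<Rightarrow> real set set \<Rightarrow> real set set" where
  "uplus S p q = {A. A \<subseteq> S \<and> {x\<in>S. lshift S x A \<in> q} \<in> p}"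

definition Oplus :: "real set \<Rightarrow> real set set set" where
  "Oplus S = {p\<in>betaS S. \<forall>\<epsilon>>0. S \<inter> {0<..<\<epsilon>} \<in> p}"

text \<open>Two-sided ideals of a subsemigroup T of betaS, and the smallest ideal K(T)
  (the intersection of all ideals; it is the smallest ideal whenever one exists,
  as is the case for compact right topological semigroups).\<close>
definition is_ideal :: "real set \<Rightarrow> real set set set \<Rightarrow> real set set set \<Rightarrow> bool" where
  "is_ideal S T I \<longleftrightarrow> I \<noteq> {} \<and> I \<subseteq> T \<and>
     (\<forall>p\<in>T. \<forall>q\<in>I. uplus S p q \<in> I \<and> uplus S q p \<in> I)"

definition Kideal :: "real set \<Rightarrow> real set set set \<Rightarrow> real set set set" where
  "Kideal S T = \<Inter>{I. is_ideal S T I}"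

text \<open>Closure in betaS (basic open sets are {p. A in p}).\<close>
definition betaCl :: "real set \<Rightarrow> real set set set \<Rightarrow> real set set set" where
  "betaCl S P = {p\<in>betaS S. \<forall>A\<in>p. \<exists>q\<in>P. A \<in> q}"

definition quasi_central_near_zero :: "real set \<Rightarrow> real set \<Rightarrow> bool" where
  "quasi_central_near_zero S A \<longleftrightarrow>
     (\<exists>p\<in>betaCl S (Kideal S (Oplus S)). uplus S p p = p \<and> A \<in> p)"

definition piecewise_syndetic_near_zero :: "real set \<Rightarrow> real set \<Rightarrow> bool" where
  "piecewise_syndetic_near_zero S A \<longleftrightarrow>
     (\<exists>F :: nat \<Rightarrow> real set. \<exists>\<delta> :: nat \<Rightarrow> real.
        (\<forall>n\<ge>1. finite (F n) \<and> F n \<noteq> {} \<and> F n \<subseteq> {0<..<1 / real n} \<inter> S \<and>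
                0 < \<delta> n \<and> \<delta> n < 1 / real n) \<and>
        (\<forall>G. finite G \<and> G \<noteq> {} \<and> G \<subseteq> S \<longrightarrow>
           (\<forall>\<mu>>0. \<exists>x\<in>{0<..<\<mu>} \<inter> S. \<forall>n\<ge>1.
              (\<lambda>g. g + x) ` (G \<inter> {0<..<\<delta> n}) \<subseteq> (\<Union>t\<in>F n. lshift S t A))))"

definition dynamical_system :: "real set \<Rightarrow> 'a topology \<Rightarrow> (real \<Rightarrow> 'a \<Rightarrow> 'a) \<Rightarrow> bool" where
  "dynamical_system S X T \<longleftrightarrow> compact_space X \<and> Hausdorff_space X \<and>
     (\<forall>s\<in>S. continuous_map X X (T s)) \<and>
     (\<forall>s\<in>S. \<forall>t\<in>S. \<forall>z\<in>topspace X. T s (T t z) = T (s + t) z)"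

definition is_nbhd :: "'a topology \<Rightarrow> 'a set \<Rightarrow> 'a \<Rightarrow> bool" where
  "is_nbhd X U y \<longleftrightarrow> U \<subseteq> topspace X \<and> (\<exists>V. openin X V \<and> y \<in> V \<and> V \<subseteq> U)"

definition JIUR0 :: "real set \<Rightarrow> 'a topology \<Rightarrow> (real \<Rightarrow> 'a \<Rightarrow> 'a) \<Rightarrow> 'a \<Rightarrow> 'a \<Rightarrow> bool" where
  "JIUR0 S X T x y \<longleftrightarrow>
     (\<forall>U. is_nbhd X U y \<longrightarrow>
        piecewise_syndetic_near_zero S {s\<in>S. T s x \<in> U \<and> T s y \<in> U})"

end

theory Submission
  imports Defs
begin


lemma uf_sub: "is_ultrafilter S p \<Longrightarrow> A \<in> p \<Longrightarrow> A \<subseteq> S"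
  unfolding is_ultrafilter_def by blast
lemma uf_S: "is_ultrafilter S p \<Longrightarrow> S \<in> p"
  unfolding is_ultrafilter_def by blast
lemma uf_mono: "is_ultrafilter S p \<Longrightarrow> A \<in> p \<Longrightarrow> A \<subseteq> B \<Longrightarrow> B \<subseteq> S \<Longrightarrow> B \<in> p"
  unfolding is_ultrafilter_def by blast
lemma uf_int: "is_ultrafilter S p \<Longrightarrow> A \<in> p \<Longrightarrow> B \<in> p \<Longrightarrow> A \<inter> B \<in> p"
  unfolding is_ultrafilter_def by blast
lemma uf_ne: "is_ultrafilter S p \<Longrightarrow> A \<in> p \<Longrightarrow> A \<noteq> {}"
  unfolding is_ultrafilter_def by blast
lemma uf_compl: "is_ultrafilter S p \<Longrightarrow> A \<subseteq> S \<Longrightarrow> A \<notin> p \<longleftrightarrow> S - A \<in> p"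
proof -
  assume u: "is_ultrafilter S p" and AS: "A \<subseteq> S"
  have "A \<in> p \<Longrightarrow> S - A \<in> p \<Longrightarrow> False"
  proof -
    assume "A \<in> p" "S - A \<in> p"
    then have "A \<inter> (S - A) \<in> p" by (rule uf_int[OF u])
    then show False using uf_ne[OF u] by auto
  qed
  moreover have "A \<in> p \<or> S - A \<in> p" using u AS unfolding is_ultrafilter_def by blast
  ultimately show ?thesis by blast
qed
lemma uf_eq: "is_ultrafilter S p \<Longrightarrow> is_ultrafilter S q \<Longrightarrow> p \<subseteq> q \<Longrightarrow> p = q"
proof -
  assume u: "is_ultrafilter S p" and v: "is_ultrafilter S q" and pq: "p \<subseteq> q"
  show "p = q"
  proof (rule subset_antisym[OF pq], rule subsetI)
    fix A assume Aq: "A \<in> q"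
    show "A \<in> p"
    proof (rule ccontr)
      assume "A \<notin> p"
      then have "S - A \<in> q" using uf_compl[OF u] pq uf_sub[OF v Aq] by blast
      then have "A \<inter> (S - A) \<in> q" using uf_int[OF v Aq] by blast
      then show False using uf_ne[OF v] by blast
    qed
  qed
qed
lemma uf_un2: "is_ultrafilter S p \<Longrightarrow> A \<union> B \<in> p \<Longrightarrow> A \<in> p \<or> B \<in> p"
proof (rule ccontr)
  assume u: "is_ultrafilter S p" and AB: "A \<union> B \<in> p" and n: "\<not> (A \<in> p \<or> B \<in> p)"
  then have "S - A \<in> p" "S - B \<in> p" using uf_compl[OF u] uf_sub[OF u AB] by blast+
  then have "(S - A) \<inter> (S - B) \<in> p" using uf_int[OF u] by blast
  then have "(A \<union> B) \<inter> ((S - A) \<inter> (S - B)) \<in> p" using uf_int[OF u AB] by blast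
  then show False using uf_ne[OF u] by blast
qed
lemma uf_Union: "finite I \<Longrightarrow> is_ultrafilter S p \<Longrightarrow> (\<Union>i\<in>I. A i) \<in> p \<Longrightarrow> \<exists>i\<in>I. A i \<in> p"
proof (induction I rule: finite_induct)
  case empty then show ?case using uf_ne by auto
next
  case (insert x F) then show ?case using uf_un2[of S p "A x" "\<Union>i\<in>F. A i"] by auto
qed
lemma uf_Inter: "finite I \<Longrightarrow> is_ultrafilter S p \<Longrightarrow> (\<forall>i\<in>I. A i \<in> p) \<Longrightarrow> S \<inter> (\<Inter>i\<in>I. A i) \<in> p"
proof (induction I rule: finite_induct)
  case empty then show ?case using uf_S by auto
next
  case (insert x F)
  then have "A x \<inter> (S \<inter> (\<Inter>i\<in>F. A i)) \<in> p" using uf_int by auto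
  then show ?case by (simp add: Int_left_commute)
qed

definition filt :: "real set \<Rightarrow> real set set \<Rightarrow> bool" where
  "filt S F \<longleftrightarrow> F \<subseteq> Pow S \<and> S \<in> F \<and> {} \<notin> F \<and>
     (\<forall>A\<in>F. \<forall>B. A \<subseteq> B \<and> B \<subseteq> S \<longrightarrow> B \<in> F) \<and> (\<forall>A\<in>F. \<forall>B\<in>F. A \<inter> B \<in> F)"

lemma filt_D:
  assumes "filt S F"
  shows "F \<subseteq> Pow S" "S \<in> F" "{} \<notin> F" "\<And>A B. A \<in> F \<Longrightarrow> A \<subseteq> B \<Longrightarrow> B \<subseteq> S \<Longrightarrow> B \<in> F"
    "\<And>A B. A \<in> F \<Longrightarrow> B \<in> F \<Longrightarrow> A \<inter> B \<in> F"
  using assms unfolding filt_def by blast+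

lemma uf_exists:
  assumes B: "\<B> \<subseteq> Pow S" "\<B> \<noteq> {}" "{} \<notin> \<B>" "\<forall>A\<in>\<B>. \<forall>B\<in>\<B>. \<exists>C\<in>\<B>. C \<subseteq> A \<inter> B"
  shows "\<exists>p. is_ultrafilter S p \<and> \<B> \<subseteq> p"
proof -
  define \<FF> where "\<FF> = {F. filt S F \<and> \<B> \<subseteq> F}"
  define F0 where "F0 = {A. A \<subseteq> S \<and> (\<exists>C\<in>\<B>. C \<subseteq> A)}"
  have F0: "F0 \<in> \<FF>"
  proof -
    have "filt S F0"
      unfolding filt_def F0_def
    proof (intro conjI)
      show "S \<in> {A. A \<subseteq> S \<and> (\<exists>C\<in>\<B>. C \<subseteq> A)}" using B(1,2) by auto
      show "\<forall>A\<in>{A. A \<subseteq> S \<and> (\<exists>C\<in>\<B>. C \<subseteq> A)}. \<forall>B\<in>{A. A \<subseteq> S \<and> (\<exists>C\<in>\<B>. C \<subseteq> A)}. A \<inter> B \<in> {A. A \<subseteq> S \<and> (\<exists>C\<in>\<B>. C \<subseteq> A)}"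
      proof (intro ballI)
        fix X Y assume "X \<in> {A. A \<subseteq> S \<and> (\<exists>C\<in>\<B>. C \<subseteq> A)}" "Y \<in> {A. A \<subseteq> S \<and> (\<exists>C\<in>\<B>. C \<subseteq> A)}"
        then obtain C D where CD: "C \<in> \<B>" "D \<in> \<B>" "C \<subseteq> X" "D \<subseteq> Y" "X \<subseteq> S" "Y \<subseteq> S" by blast
        obtain E where "E \<in> \<B>" "E \<subseteq> C \<inter> D" using bspec[OF bspec[OF B(4) CD(1)] CD(2)] by blast
        then show "X \<inter> Y \<in> {A. A \<subseteq> S \<and> (\<exists>C\<in>\<B>. C \<subseteq> A)}" using CD by blast
      qed
    next
      show "{A. A \<subseteq> S \<and> (\<exists>C\<in>\<B>. C \<subseteq> A)} \<subseteq> Pow S" by auto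
      show "{} \<notin> {A. A \<subseteq> S \<and> (\<exists>C\<in>\<B>. C \<subseteq> A)}" using B(3) by auto
      show "\<forall>A\<in>{A. A \<subseteq> S \<and> (\<exists>C\<in>\<B>. C \<subseteq> A)}. \<forall>B. A \<subseteq> B \<and> B \<subseteq> S \<longrightarrow> B \<in> {A. A \<subseteq> S \<and> (\<exists>C\<in>\<B>. C \<subseteq> A)}"
        by blast
    qed
    moreover have "\<B> \<subseteq> F0" unfolding F0_def using B(1) by blast
    ultimately show ?thesis unfolding \<FF>_def by blast
  qed
  have "\<forall>C\<in>chains \<FF>. \<exists>U\<in>\<FF>. \<forall>X\<in>C. X \<subseteq> U"
  proof
    fix C assume C: "C \<in> chains \<FF>"
    show "\<exists>U\<in>\<FF>. \<forall>X\<in>C. X \<subseteq> U"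
    proof (cases "C = {}")
      case True then show ?thesis using F0 by auto
    next
      case False
      have ch: "\<forall>X\<in>C. \<forall>Y\<in>C. X \<subseteq> Y \<or> Y \<subseteq> X" and sub: "C \<subseteq> \<FF>"
        using C unfolding chains_def chain_subset_def by auto
      have F: "\<And>F. F \<in> C \<Longrightarrow> filt S F \<and> \<B> \<subseteq> F" using sub unfolding \<FF>_def by blast
      have "filt S (\<Union>C)" unfolding filt_def
      proof (intro conjI ballI allI impI)
        show "\<Union>C \<subseteq> Pow S"
        proof
          fix A assume "A \<in> \<Union>C" then obtain F where "F \<in> C" "A \<in> F" by blast
          then show "A \<in> Pow S" using filt_D[OF conjunct1[OF F[of F]]] by blast
        qed
        obtain F where "F \<in> C" using False by blast
        then show "S \<in> \<Union>C" using filt_D[OF conjunct1[OF F[of F]]] by blast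
        show "{} \<notin> \<Union>C"
        proof
          assume "{} \<in> \<Union>C" then obtain F where "F \<in> C" "{} \<in> F" by blast
          then show False using filt_D[OF conjunct1[OF F[of F]]] by blast
        qed
      next
        fix A B assume "A \<in> \<Union>C" "A \<subseteq> B \<and> B \<subseteq> S"
        then obtain F where "F \<in> C" "A \<in> F" "A \<subseteq> B" "B \<subseteq> S" by blast
        then have "B \<in> F" using filt_D[OF conjunct1[OF F[of F]]] by blast
        then show "B \<in> \<Union>C" using \<open>F \<in> C\<close> by blast
      next
        fix A B assume a: "A \<in> \<Union>C" "B \<in> \<Union>C"
        then obtain X Y where XY: "X \<in> C" "Y \<in> C" "A \<in> X" "B \<in> Y" by auto
        then have "X \<subseteq> Y \<or> Y \<subseteq> X" using ch by auto
        then show "A \<inter> B \<in> \<Union>C"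
        proof
          assume "X \<subseteq> Y" then have "A \<inter> B \<in> Y" using XY filt_D(5)[OF conjunct1[OF F[of Y]]] by blast
          then show ?thesis using XY by blast
        next
          assume "Y \<subseteq> X" then have "A \<inter> B \<in> X" using XY filt_D(5)[OF conjunct1[OF F[of X]]] by blast
          then show ?thesis using XY by blast
        qed
      qed
      moreover have "\<B> \<subseteq> \<Union>C" using sub False unfolding \<FF>_def by auto
      ultimately show ?thesis unfolding \<FF>_def by auto
    qed
  qed
  from Zorn_Lemma2[OF this] obtain M where M: "M \<in> \<FF>" "\<forall>X\<in>\<FF>. M \<subseteq> X \<longrightarrow> X = M" by blast
  have fM: "filt S M" "\<B> \<subseteq> M" using M unfolding \<FF>_def by auto
  have "is_ultrafilter S M"
    unfolding is_ultrafilter_def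
  proof (intro conjI allI impI)
    show "M \<subseteq> Pow S" "S \<in> M" "{} \<notin> M" "\<forall>A\<in>M. \<forall>B. A \<subseteq> B \<and> B \<subseteq> S \<longrightarrow> B \<in> M"
      "\<forall>A\<in>M. \<forall>B\<in>M. A \<inter> B \<in> M" using filt_D[OF fM(1)] by auto
    fix A assume AS: "A \<subseteq> S"
    show "A \<in> M \<or> S - A \<in> M"
    proof (rule ccontr)
      assume n: "\<not> (A \<in> M \<or> S - A \<in> M)"
      define M' where "M' = {B. B \<subseteq> S \<and> (\<exists>C\<in>M. C \<inter> A \<subseteq> B)}"
      have "filt S M'" unfolding filt_def M'_def
      proof (intro conjI)
        show "S \<in> {B. B \<subseteq> S \<and> (\<exists>C\<in>M. C \<inter> A \<subseteq> B)}" using filt_D[OF fM(1)] by auto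
        show "{} \<notin> {B. B \<subseteq> S \<and> (\<exists>C\<in>M. C \<inter> A \<subseteq> B)}"
        proof
          assume "{} \<in> {B. B \<subseteq> S \<and> (\<exists>C\<in>M. C \<inter> A \<subseteq> B)}"
          then obtain C where "C \<in> M" "C \<inter> A = {}" by auto
          moreover then have "C \<subseteq> S - A" using filt_D[OF fM(1)] by auto
          ultimately have "S - A \<in> M" using filt_D[OF fM(1)] by blast
          then show False using n by auto
        qed
        show "\<forall>X\<in>{B. B \<subseteq> S \<and> (\<exists>C\<in>M. C \<inter> A \<subseteq> B)}. \<forall>Y\<in>{B. B \<subseteq> S \<and> (\<exists>C\<in>M. C \<inter> A \<subseteq> B)}.
          X \<inter> Y \<in> {B. B \<subseteq> S \<and> (\<exists>C\<in>M. C \<inter> A \<subseteq> B)}"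
        proof (intro ballI)
          fix X Y assume "X \<in> {B. B \<subseteq> S \<and> (\<exists>C\<in>M. C \<inter> A \<subseteq> B)}" "Y \<in> {B. B \<subseteq> S \<and> (\<exists>C\<in>M. C \<inter> A \<subseteq> B)}"
          then obtain C D where "C \<in> M" "D \<in> M" "C \<inter> A \<subseteq> X" "D \<inter> A \<subseteq> Y" "X \<subseteq> S" "Y \<subseteq> S" by auto
          moreover then have "C \<inter> D \<in> M" using filt_D[OF fM(1)] by auto
          ultimately show "X \<inter> Y \<in> {B. B \<subseteq> S \<and> (\<exists>C\<in>M. C \<inter> A \<subseteq> B)}" by blast
        qed
      qed auto
      moreover have "M \<subseteq> M'" unfolding M'_def using filt_D[OF fM(1)] by blast
      moreover have "\<B> \<subseteq> M'" using \<open>M \<subseteq> M'\<close> fM(2) by (rule order_trans[rotated])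
      ultimately have "M' \<in> \<FF>" unfolding \<FF>_def by blast
      then have "M' = M" using M(2) \<open>M \<subseteq> M'\<close> by blast
      moreover have "A \<in> M'" unfolding M'_def using AS fM unfolding filt_def by blast
      ultimately show False using n by auto
    qed
  qed
  then show ?thesis using fM by auto
qed



lemma betaS_iff: "p \<in> betaS S \<longleftrightarrow> is_ultrafilter S p" unfolding betaS_def by simp

lemma lshift_sub: "lshift S x A \<subseteq> S" unfolding lshift_def by auto
lemma lshift_mono: "A \<subseteq> B \<Longrightarrow> lshift S x A \<subseteq> lshift S x B" unfolding lshift_def by auto
lemma lshift_Int: "lshift S x (A \<inter> B) = lshift S x A \<inter> lshift S x B" unfolding lshift_def by auto
lemma lshift_empty: "lshift S x {} = {}" unfolding lshift_def by auto
lemma lshift_Un: "lshift S x (\<Union>i\<in>I. A i) = (\<Union>i\<in>I. lshift S x (A i))" unfolding lshift_def by auto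

locale dss =
  fixes S :: "real set"
  assumes dss: "dense_subsemigroup S"
begin

lemma S_pos: "s \<in> S \<Longrightarrow> 0 < s" using dss unfolding dense_subsemigroup_def by auto
lemma S_add: "s \<in> S \<Longrightarrow> t \<in> S \<Longrightarrow> s + t \<in> S" using dss unfolding dense_subsemigroup_def by auto
lemma S_dense: "0 < a \<Longrightarrow> a < b \<Longrightarrow> \<exists>s\<in>S. a < s \<and> s < b" using dss unfolding dense_subsemigroup_def by auto
lemma S_small: "0 < e \<Longrightarrow> S \<inter> {0<..<e} \<noteq> {}"
  using S_dense[of "e/2" e] by auto

lemma lshift_S: "x \<in> S \<Longrightarrow> lshift S x S = S" unfolding lshift_def using S_add by auto
lemma lshift_compl: "x \<in> S \<Longrightarrow> lshift S x (S - A) = S - lshift S x A"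
  unfolding lshift_def using S_add by auto
lemma lshift_lshift: "y \<in> S \<Longrightarrow> z \<in> S \<Longrightarrow> lshift S z (lshift S y A) = lshift S (y + z) A"
  unfolding lshift_def using S_add by (auto simp: add.assoc)

lemma uplus_uf:
  assumes p: "p \<in> betaS S" and q: "q \<in> betaS S"
  shows "uplus S p q \<in> betaS S"
proof -
  have up: "is_ultrafilter S p" and uq: "is_ultrafilter S q" using p q by (auto simp: betaS_iff)
  define E where "E A = {x\<in>S. lshift S x A \<in> q}" for A
  have mem: "A \<in> uplus S p q \<longleftrightarrow> A \<subseteq> S \<and> E A \<in> p" for A unfolding uplus_def E_def by simp
  have ES: "E S = S" unfolding E_def using lshift_S uf_S[OF uq] by auto
  have Ee: "E {} = {}" unfolding E_def using lshift_empty uf_ne[OF uq] by auto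
  have Emono: "E A \<subseteq> E B" if AB: "A \<subseteq> B" for A B
  proof
    fix x assume "x \<in> E A"
    then show "x \<in> E B" unfolding E_def using uf_mono[OF uq, of "lshift S x A" "lshift S x B"] lshift_mono[OF AB, of S x] lshift_sub[of S x B] by blast
  qed
  have Eint: "E (A \<inter> B) = E A \<inter> E B" for A B
  proof -
    have "lshift S x A \<inter> lshift S x B \<in> q \<longleftrightarrow> lshift S x A \<in> q \<and> lshift S x B \<in> q" for x
    proof
      assume h: "lshift S x A \<inter> lshift S x B \<in> q"
      show "lshift S x A \<in> q \<and> lshift S x B \<in> q"
        using uf_mono[OF uq h, of "lshift S x A"] uf_mono[OF uq h, of "lshift S x B"] lshift_sub by blast
    next
      assume "lshift S x A \<in> q \<and> lshift S x B \<in> q"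
      then show "lshift S x A \<inter> lshift S x B \<in> q" using uf_int[OF uq, of "lshift S x A" "lshift S x B"] by blast
    qed
    then show ?thesis unfolding E_def lshift_Int by blast
  qed
  have Ecomp: "E (S - A) = S - E A" for A
  proof -
    have "lshift S x (S - A) \<in> q \<longleftrightarrow> lshift S x A \<notin> q" if "x \<in> S" for x
      using lshift_compl[OF that, of A] uf_compl[OF uq, of "lshift S x A", OF lshift_sub] by simp
    then show ?thesis unfolding E_def by auto
  qed
  have "is_ultrafilter S (uplus S p q)"
    unfolding is_ultrafilter_def
  proof (intro conjI ballI allI impI)
    show "uplus S p q \<subseteq> Pow S" using mem by auto
    show "S \<in> uplus S p q" using mem ES uf_S[OF up] by auto
    show "{} \<notin> uplus S p q" using mem Ee uf_ne[OF up] by auto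
  next
    fix A B assume "A \<in> uplus S p q" "A \<subseteq> B \<and> B \<subseteq> S"
    then show "B \<in> uplus S p q" using mem Emono[of A B] uf_mono[OF up, of "E A" "E B"]
      unfolding E_def by auto
  next
    fix A B assume "A \<in> uplus S p q" "B \<in> uplus S p q"
    then show "A \<inter> B \<in> uplus S p q" using mem Eint uf_int[OF up, of "E A" "E B"] by auto
  next
    fix A assume AS: "A \<subseteq> S"
    show "A \<in> uplus S p q \<or> S - A \<in> uplus S p q"
    proof (cases "E A \<in> p")
      case True then show ?thesis using mem AS by auto
    next
      case False
      then have "S - E A \<in> p" using uf_compl[OF up, of "E A"] unfolding E_def by auto
      then show ?thesis using mem Ecomp by auto
    qed
  qed
  then show ?thesis by (simp add: betaS_iff)
qed

lemma uplus_assoc: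
  assumes p: "p \<in> betaS S" and q: "q \<in> betaS S" and r: "r \<in> betaS S"
  shows "uplus S (uplus S p q) r = uplus S p (uplus S q r)"
proof -
  have uq: "is_ultrafilter S q" using q by (auto simp: betaS_iff)
  have "A \<in> uplus S (uplus S p q) r \<longleftrightarrow> A \<in> uplus S p (uplus S q r)" for A
  proof -
    have e1: "lshift S y {x\<in>S. lshift S x A \<in> r} = {z\<in>S. lshift S (y + z) A \<in> r}" if "y \<in> S" for y
      unfolding lshift_def using S_add that by auto
    have e2: "lshift S y A \<in> uplus S q r \<longleftrightarrow> {z\<in>S. lshift S (y + z) A \<in> r} \<in> q" if "y \<in> S" for y
    proof -
      have "{z\<in>S. lshift S z (lshift S y A) \<in> r} = {z\<in>S. lshift S (y + z) A \<in> r}"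
        using lshift_lshift[OF that] by auto
      then show ?thesis unfolding uplus_def using lshift_sub by auto
    qed
    have "A \<in> uplus S (uplus S p q) r \<longleftrightarrow> A \<subseteq> S \<and> {y\<in>S. {z\<in>S. lshift S (y + z) A \<in> r} \<in> q} \<in> p"
    proof -
      have "{y\<in>S. lshift S y {x\<in>S. lshift S x A \<in> r} \<in> q} = {y\<in>S. {z\<in>S. lshift S (y + z) A \<in> r} \<in> q}"
        using e1 by auto
      then show ?thesis unfolding uplus_def by auto
    qed
    moreover have "A \<in> uplus S p (uplus S q r) \<longleftrightarrow> A \<subseteq> S \<and> {y\<in>S. {z\<in>S. lshift S (y + z) A \<in> r} \<in> q} \<in> p"
    proof -
      have "{y\<in>S. lshift S y A \<in> uplus S q r} = {y\<in>S. {z\<in>S. lshift S (y + z) A \<in> r} \<in> q}"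
        using e2 by auto
      then show ?thesis unfolding uplus_def by auto
    qed
    ultimately show ?thesis by simp
  qed
  then show ?thesis by blast
qed

lemma Oplus_sub: "Oplus S \<subseteq> betaS S" unfolding Oplus_def by auto
lemma Oplus_iff: "p \<in> Oplus S \<longleftrightarrow> p \<in> betaS S \<and> (\<forall>e>0. S \<inter> {0<..<e} \<in> p)"
  unfolding Oplus_def by auto

lemma Oplus_uplus:
  assumes p: "p \<in> Oplus S" and q: "q \<in> Oplus S"
  shows "uplus S p q \<in> Oplus S"
proof -
  have pb: "p \<in> betaS S" and qb: "q \<in> betaS S" using p q Oplus_sub by auto
  have up: "is_ultrafilter S p" and uq: "is_ultrafilter S q" using pb qb by (auto simp: betaS_iff)
  have "S \<inter> {0<..<e} \<in> uplus S p q" if e: "e > 0" for e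
  proof -
    have "S \<inter> {0<..<e/2} \<subseteq> {x\<in>S. lshift S x (S \<inter> {0<..<e}) \<in> q}"
    proof
      fix x assume x: "x \<in> S \<inter> {0<..<e/2}"
      have "S \<inter> {0<..<e/2} \<subseteq> lshift S x (S \<inter> {0<..<e})"
        unfolding lshift_def using x S_add S_pos by auto
      moreover have "S \<inter> {0<..<e/2} \<in> q" using q e unfolding Oplus_iff by auto
      ultimately have "lshift S x (S \<inter> {0<..<e}) \<in> q" using uf_mono[OF uq, of "S \<inter> {0<..<e/2}"] lshift_sub by blast
      then show "x \<in> {x\<in>S. lshift S x (S \<inter> {0<..<e}) \<in> q}" using x by auto
    qed
    moreover have "S \<inter> {0<..<e/2} \<in> p" using p e unfolding Oplus_iff by auto
    ultimately have "{x\<in>S. lshift S x (S \<inter> {0<..<e}) \<in> q} \<in> p" using uf_mono[OF up, of "S \<inter> {0<..<e/2}"] by blast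
    then show ?thesis unfolding uplus_def by auto
  qed
  then show ?thesis unfolding Oplus_iff using uplus_uf[OF pb qb] by auto
qed

lemma O_exists_with:
  assumes "E \<subseteq> S" "\<forall>e>0. E \<inter> {0<..<e} \<noteq> {}"
  shows "\<exists>p\<in>Oplus S. E \<in> p"
proof -
  define \<B> where "\<B> = {E \<inter> {0<..<e} | e. e > 0}"
  have "\<exists>p. is_ultrafilter S p \<and> \<B> \<subseteq> p"
  proof (rule uf_exists)
    show "\<B> \<subseteq> Pow S" unfolding \<B>_def using assms(1) by auto
    show "\<B> \<noteq> {}" unfolding \<B>_def by (auto intro: exI[of _ 1])
    show "{} \<notin> \<B>" unfolding \<B>_def using assms(2) by auto
    show "\<forall>A\<in>\<B>. \<forall>B\<in>\<B>. \<exists>C\<in>\<B>. C \<subseteq> A \<inter> B"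
    proof (intro ballI)
      fix A B assume "A \<in> \<B>" "B \<in> \<B>"
      then obtain a b where "a > 0" "b > 0" "A = E \<inter> {0<..<a}" "B = E \<inter> {0<..<b}" unfolding \<B>_def by auto
      then show "\<exists>C\<in>\<B>. C \<subseteq> A \<inter> B" unfolding \<B>_def
        by (intro bexI[of _ "E \<inter> {0<..<min a b}"]) auto
    qed
  qed
  then obtain p where up: "is_ultrafilter S p" and Bp: "\<B> \<subseteq> p" by blast
  have "S \<inter> {0<..<e} \<in> p" if "e > 0" for e
  proof -
    have "E \<inter> {0<..<e} \<in> \<B>" unfolding \<B>_def using that by blast
    then have "E \<inter> {0<..<e} \<in> p" using Bp by blast
    then show ?thesis using uf_mono[OF up, of "E \<inter> {0<..<e}"] assms(1) by blast
  qed
  moreover have "E \<in> p"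
  proof -
    have "E \<inter> {0<..<1} \<in> \<B>" unfolding \<B>_def by force
    then have "E \<inter> {0<..<1} \<in> p" using Bp by auto
    then show ?thesis using uf_mono[OF up, of "E \<inter> {0<..<1}" E] assms(1) by blast
  qed
  ultimately have "p \<in> Oplus S" "E \<in> p" unfolding Oplus_iff betaS_iff using up by auto
  then show ?thesis by blast
qed

lemma Oplus_ne: "Oplus S \<noteq> {}"
  using O_exists_with[of S] S_small by auto

end


definition closedb :: "real set \<Rightarrow> real set set set \<Rightarrow> bool" where
  "closedb S C \<longleftrightarrow> C \<subseteq> betaS S \<and> betaCl S C \<subseteq> C"

lemma cl_iff: "p \<in> betaCl S P \<longleftrightarrow> p \<in> betaS S \<and> (\<forall>A\<in>p. \<exists>q\<in>P. A \<in> q)"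
  unfolding betaCl_def by simp
lemma cl_sub: "betaCl S P \<subseteq> betaS S" unfolding betaCl_def by auto
lemma cl_ext: "P \<subseteq> betaS S \<Longrightarrow> P \<subseteq> betaCl S P" unfolding betaCl_def by auto
lemma cl_mono: "P \<subseteq> Q \<Longrightarrow> betaCl S P \<subseteq> betaCl S Q" unfolding betaCl_def by blast
lemma cl_closed: "closedb S (betaCl S P)" unfolding closedb_def betaCl_def by blast
lemma closedD: "closedb S C \<Longrightarrow> p \<in> betaCl S C \<Longrightarrow> p \<in> C" unfolding closedb_def by blast
lemma closed_sub: "closedb S C \<Longrightarrow> C \<subseteq> betaS S" unfolding closedb_def by blast

lemma closed_basic: "closedb S {p\<in>betaS S. A \<in> p}"
  unfolding closedb_def
proof (intro conjI subsetI)
  fix p assume p: "p \<in> betaCl S {p\<in>betaS S. A \<in> p}"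
  then have pb: "p \<in> betaS S" using cl_sub by blast
  then have up: "is_ultrafilter S p" by (simp add: betaS_iff)
  obtain q0 where "q0 \<in> {p\<in>betaS S. A \<in> p}" using p uf_S[OF up] unfolding cl_iff by blast
  then have AS: "A \<subseteq> S" using uf_sub by (auto simp: betaS_iff)
  have "A \<in> p"
  proof (rule ccontr)
    assume "A \<notin> p"
    then have "S - A \<in> p" using uf_compl[OF up AS] by blast
    then obtain q where q: "q \<in> betaS S" "A \<in> q" "S - A \<in> q" using p unfolding cl_iff by blast
    then have uq: "is_ultrafilter S q" by (simp add: betaS_iff)
    have "A \<inter> (S - A) \<in> q" using uf_int[OF uq q(2) q(3)] .
    then show False using uf_ne[OF uq] by blast
  qed
  then show "p \<in> {p\<in>betaS S. A \<in> p}" using pb by blast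
qed auto

lemma closed_Int: "closedb S C \<Longrightarrow> closedb S D \<Longrightarrow> closedb S (C \<inter> D)"
  unfolding closedb_def using cl_mono[of "C \<inter> D" C S] cl_mono[of "C \<inter> D" D S] by blast

lemma closed_Inter: "\<CC> \<noteq> {} \<Longrightarrow> \<forall>C\<in>\<CC>. closedb S C \<Longrightarrow> closedb S (\<Inter>\<CC>)"
proof -
  assume ne: "\<CC> \<noteq> {}" and c: "\<forall>C\<in>\<CC>. closedb S C"
  have "\<Inter>\<CC> \<subseteq> betaS S" using ne c unfolding closedb_def by blast
  moreover have "betaCl S (\<Inter>\<CC>) \<subseteq> C" if "C \<in> \<CC>" for C
    using cl_mono[of "\<Inter>\<CC>" C S] that c unfolding closedb_def by blast
  ultimately show ?thesis unfolding closedb_def by blast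
qed

lemma closed_betaS: "closedb S (betaS S)" unfolding closedb_def using cl_sub by blast

lemma closed_Oplus: "closedb S (Oplus S)"
  unfolding closedb_def
proof (intro conjI subsetI)
  show "p \<in> betaS S" if "p \<in> Oplus S" for p using that unfolding Oplus_def by blast
  fix p assume p: "p \<in> betaCl S (Oplus S)"
  then have pb: "p \<in> betaS S" using cl_sub by blast
  then have up: "is_ultrafilter S p" by (simp add: betaS_iff)
  have "S \<inter> {0<..<e} \<in> p" if e: "e > 0" for e
  proof (rule ccontr)
    assume "S \<inter> {0<..<e} \<notin> p"
    then have "S - (S \<inter> {0<..<e}) \<in> p" using uf_compl[OF up, of "S \<inter> {0<..<e}"] by blast
    then obtain q where q: "q \<in> Oplus S" "S - (S \<inter> {0<..<e}) \<in> q" using p unfolding cl_iff by blast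
    then have uq: "is_ultrafilter S q" and q2: "S \<inter> {0<..<e} \<in> q" using e unfolding Oplus_def betaS_def by auto
    have "(S - (S \<inter> {0<..<e})) \<inter> (S \<inter> {0<..<e}) \<in> q" using uf_int[OF uq q(2) q2] .
    then show False using uf_ne[OF uq] by blast
  qed
  then show "p \<in> Oplus S" using pb unfolding Oplus_def by blast
qed

lemma compact_dir:
  assumes ne: "\<CC> \<noteq> {}" and cl: "\<And>C. C \<in> \<CC> \<Longrightarrow> closedb S C" and nc: "\<And>C. C \<in> \<CC> \<Longrightarrow> C \<noteq> {}"
    and dir: "\<And>C1 C2. C1 \<in> \<CC> \<Longrightarrow> C2 \<in> \<CC> \<Longrightarrow> \<exists>C3\<in>\<CC>. C3 \<subseteq> C1 \<inter> C2"
  shows "\<exists>p. \<forall>C\<in>\<CC>. p \<in> C"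
proof -
  define \<B> where "\<B> = {A. A \<subseteq> S \<and> (\<exists>C\<in>\<CC>. \<forall>q\<in>C. A \<in> q)}"
  have ufC: "is_ultrafilter S q" if "q \<in> C" "C \<in> \<CC>" for q C
    using closed_sub[OF cl[OF that(2)]] that(1) by (auto simp: betaS_iff)
  have "\<exists>p. is_ultrafilter S p \<and> \<B> \<subseteq> p"
  proof (rule uf_exists)
    show "\<B> \<subseteq> Pow S" unfolding \<B>_def by blast
    obtain C0 where C0: "C0 \<in> \<CC>" using ne by blast
    have "S \<in> \<B>" unfolding \<B>_def using C0 ufC uf_S by blast
    then show "\<B> \<noteq> {}" by blast
    show "{} \<notin> \<B>"
    proof
      assume "{} \<in> \<B>"
      then obtain C where C: "C \<in> \<CC>" "\<forall>q\<in>C. {} \<in> q" unfolding \<B>_def by blast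
      obtain q where "q \<in> C" using nc[OF C(1)] by blast
      then show False using C ufC uf_ne by blast
    qed
    show "\<forall>A\<in>\<B>. \<forall>B\<in>\<B>. \<exists>C\<in>\<B>. C \<subseteq> A \<inter> B"
    proof (intro ballI)
      fix A B assume "A \<in> \<B>" "B \<in> \<B>"
      then obtain C1 C2 where C: "C1 \<in> \<CC>" "C2 \<in> \<CC>" "\<forall>q\<in>C1. A \<in> q" "\<forall>q\<in>C2. B \<in> q" "A \<subseteq> S" "B \<subseteq> S"
        unfolding \<B>_def by blast
      obtain C3 where C3: "C3 \<in> \<CC>" "C3 \<subseteq> C1 \<inter> C2" using dir[OF C(1,2)] by blast
      have "\<forall>q\<in>C3. A \<inter> B \<in> q"
      proof
        fix q assume q: "q \<in> C3"
        then have "A \<in> q" "B \<in> q" using C C3 by blast+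
        then show "A \<inter> B \<in> q" using uf_int[OF ufC[OF q C3(1)]] by blast
      qed
      then have "A \<inter> B \<in> \<B>" unfolding \<B>_def using C C3 by blast
      then show "\<exists>C\<in>\<B>. C \<subseteq> A \<inter> B" by blast
    qed
  qed
  then obtain p where up: "is_ultrafilter S p" and Bp: "\<B> \<subseteq> p" by blast
  have "p \<in> C" if C: "C \<in> \<CC>" for C
  proof -
    have "\<exists>q\<in>C. A \<in> q" if A: "A \<in> p" for A
    proof (rule ccontr)
      assume nA: "\<not> (\<exists>q\<in>C. A \<in> q)"
      have "S - A \<in> q" if q: "q \<in> C" for q
        using uf_compl[OF ufC[OF q C] uf_sub[OF up A]] nA q by blast
      then have "\<forall>q\<in>C. S - A \<in> q" by blast
      then have "S - A \<in> \<B>" unfolding \<B>_def using C by blast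
      then have "S - A \<in> p" using Bp by blast
      then have "A \<inter> (S - A) \<in> p" using uf_int[OF up A] by blast
      then show False using uf_ne[OF up] by blast
    qed
    then have "p \<in> betaCl S C" unfolding cl_iff betaS_iff using up by blast
    then show ?thesis using closedD[OF cl[OF C]] by blast
  qed
  then show ?thesis by blast
qed

lemma zorn_min:
  assumes ne: "\<FF> \<noteq> {}"
    and ch: "\<And>\<CC>. \<CC> \<subseteq> \<FF> \<Longrightarrow> \<CC> \<noteq> {} \<Longrightarrow> (\<forall>X\<in>\<CC>. \<forall>Y\<in>\<CC>. X \<subseteq> Y \<or> Y \<subseteq> X) \<Longrightarrow> \<Inter>\<CC> \<in> \<FF>"
  shows "\<exists>M\<in>\<FF>. \<forall>X\<in>\<FF>. X \<subseteq> M \<longrightarrow> X = M"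
proof -
  define \<GG> where "\<GG> = uminus ` \<FF>"
  have "\<forall>C\<in>chains \<GG>. \<exists>U\<in>\<GG>. \<forall>X\<in>C. X \<subseteq> U"
  proof
    fix C assume C: "C \<in> chains \<GG>"
    show "\<exists>U\<in>\<GG>. \<forall>X\<in>C. X \<subseteq> U"
    proof (cases "C = {}")
      case True then show ?thesis using ne unfolding \<GG>_def by blast
    next
      case False
      have sub: "C \<subseteq> \<GG>" and chC: "\<forall>X\<in>C. \<forall>Y\<in>C. X \<subseteq> Y \<or> Y \<subseteq> X"
        using C unfolding chains_def chain_subset_def by auto
      define \<CC> where "\<CC> = uminus ` C"
      have "\<CC> \<subseteq> \<FF>" using sub unfolding \<CC>_def \<GG>_def by auto
      moreover have "\<CC> \<noteq> {}" using False unfolding \<CC>_def by blast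
      moreover have "\<forall>X\<in>\<CC>. \<forall>Y\<in>\<CC>. X \<subseteq> Y \<or> Y \<subseteq> X"
        unfolding \<CC>_def using chC by blast
      ultimately have "\<Inter>\<CC> \<in> \<FF>" by (rule ch)
      then have "- \<Inter>\<CC> \<in> \<GG>" unfolding \<GG>_def by blast
      moreover have "\<forall>X\<in>C. X \<subseteq> - \<Inter>\<CC>" unfolding \<CC>_def by blast
      ultimately show ?thesis by blast
    qed
  qed
  from Zorn_Lemma2[OF this] obtain M' where M': "M' \<in> \<GG>" "\<forall>X\<in>\<GG>. M' \<subseteq> X \<longrightarrow> X = M'" by blast
  have "- M' \<in> \<FF>" using M'(1) unfolding \<GG>_def by auto
  moreover have "\<forall>X\<in>\<FF>. X \<subseteq> - M' \<longrightarrow> X = - M'"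
  proof (intro ballI impI)
    fix X assume "X \<in> \<FF>" "X \<subseteq> - M'"
    then have "- X \<in> \<GG>" "M' \<subseteq> - X" unfolding \<GG>_def by auto
    then have "- X = M'" using M'(2) by blast
    then show "X = - M'" by auto
  qed
  ultimately show ?thesis by blast
qed

context dss begin

lemma cont_right:
  assumes p: "p \<in> betaCl S C" and q: "q \<in> betaS S"
  shows "uplus S p q \<in> betaCl S ((\<lambda>c. uplus S c q) ` C)"
  unfolding cl_iff
proof (intro conjI ballI)
  show "uplus S p q \<in> betaS S" using uplus_uf[OF _ q] p cl_sub by blast
  fix A assume "A \<in> uplus S p q"
  then have A: "A \<subseteq> S" "{x\<in>S. lshift S x A \<in> q} \<in> p" unfolding uplus_def by auto
  then obtain c where c: "c \<in> C" "{x\<in>S. lshift S x A \<in> q} \<in> c" using p unfolding cl_iff by blast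
  then have "A \<in> uplus S c q" using A(1) unfolding uplus_def by simp
  moreover have "uplus S c q \<in> (\<lambda>c. uplus S c q) ` C" using c(1) by (rule imageI)
  ultimately show "\<exists>d\<in>(\<lambda>c. uplus S c q) ` C. A \<in> d" by blast
qed

lemma image_closed:
  assumes C: "closedb S C" and q: "q \<in> betaS S"
  shows "closedb S ((\<lambda>c. uplus S c q) ` C)"
proof -
  let ?D = "(\<lambda>c. uplus S c q) ` C"
  have Db: "?D \<subseteq> betaS S" using uplus_uf[OF _ q] closed_sub[OF C] by blast
  have "p \<in> ?D" if p: "p \<in> betaCl S ?D" for p
  proof -
    have "p \<in> betaS S" using p cl_sub by blast
    then have up: "is_ultrafilter S p" by (simp add: betaS_iff)
    define CA where "CA A = {c\<in>C. A \<in> uplus S c q}" for A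
    define \<CC> where "\<CC> = CA ` p"
    have CAeq: "CA A = C \<inter> {c\<in>betaS S. {x\<in>S. lshift S x A \<in> q} \<in> c}" if "A \<subseteq> S" for A
      unfolding CA_def uplus_def using that closed_sub[OF C] by auto
    have "\<exists>c. \<forall>X\<in>\<CC>. c \<in> X"
    proof (rule compact_dir)
      show "\<CC> \<noteq> {}" unfolding \<CC>_def using uf_S[OF up] by blast
      fix X assume "X \<in> \<CC>"
      then obtain A where A: "A \<in> p" "X = CA A" unfolding \<CC>_def by blast
      show "closedb S X" using A CAeq[OF uf_sub[OF up A(1)]] closed_Int[OF C closed_basic] by simp
      obtain d where "d \<in> ?D" "A \<in> d" using p A(1) unfolding cl_iff by blast
      then show "X \<noteq> {}" using A unfolding CA_def by blast
    next
      fix X Y assume "X \<in> \<CC>" "Y \<in> \<CC>"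
      then obtain A B where AB: "A \<in> p" "B \<in> p" "X = CA A" "Y = CA B" unfolding \<CC>_def by blast
      have "A \<inter> B \<in> p" using uf_int[OF up AB(1,2)] .
      moreover have "CA (A \<inter> B) \<subseteq> X \<inter> Y"
      proof
        fix c assume c: "c \<in> CA (A \<inter> B)"
        then have cC: "c \<in> C" and m: "A \<inter> B \<in> uplus S c q" unfolding CA_def by auto
        have u: "is_ultrafilter S (uplus S c q)" using uplus_uf[OF _ q] closed_sub[OF C] cC by (auto simp: betaS_iff)
        have "A \<in> uplus S c q" "B \<in> uplus S c q"
          using uf_mono[OF u m, of A] uf_mono[OF u m, of B] uf_sub[OF up AB(1)] uf_sub[OF up AB(2)] by auto
        then show "c \<in> X \<inter> Y" using cC AB unfolding CA_def by blast
      qed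
      ultimately show "\<exists>Z\<in>\<CC>. Z \<subseteq> X \<inter> Y" unfolding \<CC>_def by blast
    qed
    then obtain c where c: "\<forall>X\<in>\<CC>. c \<in> X" by blast
    have "c \<in> CA S" using c uf_S[OF up] unfolding \<CC>_def by blast
    then have cC: "c \<in> C" unfolding CA_def by blast
    have "A \<in> uplus S c q" if "A \<in> p" for A
    proof -
      have "c \<in> CA A" using c that unfolding \<CC>_def by blast
      then show ?thesis unfolding CA_def by blast
    qed
    then have "p \<subseteq> uplus S c q" by blast
    moreover have "is_ultrafilter S (uplus S c q)" using uplus_uf[OF _ q] closed_sub[OF C] cC by (auto simp: betaS_iff)
    ultimately have "p = uplus S c q" using uf_eq[OF up] by blast
    then show ?thesis using cC by blast
  qed
  then show ?thesis unfolding closedb_def using Db by blast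
qed

end


definition leftideal :: "real set \<Rightarrow> real set set set \<Rightarrow> bool" where
  "leftideal S L \<longleftrightarrow> L \<noteq> {} \<and> L \<subseteq> Oplus S \<and> (\<forall>p\<in>Oplus S. \<forall>l\<in>L. uplus S p l \<in> L)"
definition minleft :: "real set \<Rightarrow> real set set set \<Rightarrow> bool" where
  "minleft S L \<longleftrightarrow> leftideal S L \<and> (\<forall>L'. leftideal S L' \<and> L' \<subseteq> L \<longrightarrow> L' = L)"
definition semigrp :: "real set \<Rightarrow> real set set set \<Rightarrow> bool" where
  "semigrp S N \<longleftrightarrow> (\<forall>p\<in>N. \<forall>q\<in>N. uplus S p q \<in> N)"

lemma leftidealD: "leftideal S L \<Longrightarrow> L \<noteq> {}" "leftideal S L \<Longrightarrow> L \<subseteq> Oplus S"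
  "leftideal S L \<Longrightarrow> p \<in> Oplus S \<Longrightarrow> l \<in> L \<Longrightarrow> uplus S p l \<in> L"
  unfolding leftideal_def by blast+

lemma minleftD: "minleft S L \<Longrightarrow> leftideal S L" unfolding minleft_def by blast

lemma closed_single: "p \<in> betaS S \<Longrightarrow> closedb S {p}"
  unfolding closedb_def
proof (intro conjI subsetI)
  fix r assume p: "p \<in> betaS S" and r: "r \<in> betaCl S {p}"
  have "r \<subseteq> p" using r unfolding cl_iff by blast
  moreover have "r \<in> betaS S" using r cl_sub by blast
  ultimately have "r = p" using uf_eq[of S r p] p by (simp add: betaS_iff)
  then show "r \<in> {p}" by simp
qed auto

context dss begin

abbreviation "Op \<equiv> Oplus S"
abbreviation pl (infixl "\<oplus>" 65) where "pl p q \<equiv> uplus S p q"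
abbreviation "K \<equiv> Kideal S (Oplus S)"

lemma Ob: "p \<in> Op \<Longrightarrow> p \<in> betaS S" using Oplus_sub by blast

lemma orbit_left: "r \<in> Op \<Longrightarrow> leftideal S ((\<lambda>w. w \<oplus> r) ` Op)"
  unfolding leftideal_def
proof (intro conjI ballI)
  assume r: "r \<in> Op"
  show "(\<lambda>w. w \<oplus> r) ` Op \<noteq> {}" using Oplus_ne by blast
  show "(\<lambda>w. w \<oplus> r) ` Op \<subseteq> Op" using Oplus_uplus r by blast
  fix p l assume p: "p \<in> Op" and l: "l \<in> (\<lambda>w. w \<oplus> r) ` Op"
  then obtain w where w: "w \<in> Op" "l = w \<oplus> r" by blast
  have "p \<oplus> l = (p \<oplus> w) \<oplus> r" using w uplus_assoc[OF Ob[OF p] Ob[OF w(1)] Ob[OF r]] by simp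
  moreover have "p \<oplus> w \<in> Op" using Oplus_uplus[OF p w(1)] .
  ultimately show "p \<oplus> l \<in> (\<lambda>w. w \<oplus> r) ` Op" by blast
qed

lemma orbit_closed: "r \<in> Op \<Longrightarrow> closedb S ((\<lambda>w. w \<oplus> r) ` Op)"
  using image_closed[OF closed_Oplus Ob] by blast

lemma orbit_sub: "leftideal S L \<Longrightarrow> r \<in> L \<Longrightarrow> (\<lambda>w. w \<oplus> r) ` Op \<subseteq> L"
  using leftidealD(3) by blast

lemma minleft_exists: "\<exists>L. minleft S L"
proof -
  define \<FF> where "\<FF> = {L. leftideal S L \<and> closedb S L}"
  have "Op \<in> \<FF>" unfolding \<FF>_def leftideal_def using Oplus_ne Oplus_uplus closed_Oplus by blast
  then have ne: "\<FF> \<noteq> {}" by blast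
  have "\<exists>M\<in>\<FF>. \<forall>X\<in>\<FF>. X \<subseteq> M \<longrightarrow> X = M"
  proof (rule zorn_min[OF ne])
    fix \<CC> assume sub: "\<CC> \<subseteq> \<FF>" and cne: "\<CC> \<noteq> {}" and ch: "\<forall>X\<in>\<CC>. \<forall>Y\<in>\<CC>. X \<subseteq> Y \<or> Y \<subseteq> X"
    have li: "leftideal S X" and cX: "closedb S X" if "X \<in> \<CC>" for X using sub that unfolding \<FF>_def by blast+
    have "\<exists>p. \<forall>C\<in>\<CC>. p \<in> C"
    proof (rule compact_dir[OF cne])
      show "closedb S C" if "C \<in> \<CC>" for C using cX[OF that] .
      show "C \<noteq> {}" if "C \<in> \<CC>" for C using leftidealD(1)[OF li[OF that]] .
      show "\<exists>C3\<in>\<CC>. C3 \<subseteq> C1 \<inter> C2" if "C1 \<in> \<CC>" "C2 \<in> \<CC>" for C1 C2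
      proof (cases "C1 \<subseteq> C2")
        case True then show ?thesis using that by blast
      next
        case False then have "C2 \<subseteq> C1" using ch that by blast
        then show ?thesis using that by blast
      qed
    qed
    then have "\<Inter>\<CC> \<noteq> {}" by blast
    moreover have "\<Inter>\<CC> \<subseteq> Op" using cne li leftidealD(2) by blast
    moreover have "\<forall>p\<in>Op. \<forall>l\<in>\<Inter>\<CC>. p \<oplus> l \<in> \<Inter>\<CC>" using li leftidealD(3) by blast
    moreover have "closedb S (\<Inter>\<CC>)" using closed_Inter[OF cne] cX by blast
    ultimately show "\<Inter>\<CC> \<in> \<FF>" unfolding \<FF>_def leftideal_def by blast
  qed
  then obtain M where M: "M \<in> \<FF>" "\<forall>X\<in>\<FF>. X \<subseteq> M \<longrightarrow> X = M" by blast
  have "minleft S M" unfolding minleft_def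
  proof (intro conjI allI impI)
    show "leftideal S M" using M unfolding \<FF>_def by blast
    fix L' assume L': "leftideal S L' \<and> L' \<subseteq> M"
    then obtain r where r: "r \<in> L'" using leftidealD(1) by blast
    have rO: "r \<in> Op" using r L' leftidealD(2) by blast
    have "(\<lambda>w. w \<oplus> r) ` Op \<in> \<FF>" unfolding \<FF>_def using orbit_left[OF rO] orbit_closed[OF rO] by blast
    moreover have os: "(\<lambda>w. w \<oplus> r) ` Op \<subseteq> L'" using orbit_sub r L' by blast
    moreover have "(\<lambda>w. w \<oplus> r) ` Op \<subseteq> M" using os L' by (meson order_trans)
    ultimately have "(\<lambda>w. w \<oplus> r) ` Op = M" using M(2) by simp
    then show "L' = M" using \<open>(\<lambda>w. w \<oplus> r) ` Op \<subseteq> L'\<close> L' by blast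
  qed
  then show ?thesis by blast
qed

lemma minleft_shift:
  assumes L: "minleft S L" and b: "b \<in> Op"
  shows "minleft S ((\<lambda>l. l \<oplus> b) ` L)"
proof -
  have li: "leftideal S L" using L unfolding minleft_def by blast
  have LO: "L \<subseteq> Op" using leftidealD(2)[OF li] .
  have li2: "leftideal S ((\<lambda>l. l \<oplus> b) ` L)" unfolding leftideal_def
  proof (intro conjI ballI)
    show "(\<lambda>l. l \<oplus> b) ` L \<noteq> {}" using leftidealD(1)[OF li] by blast
    show "(\<lambda>l. l \<oplus> b) ` L \<subseteq> Op" using LO Oplus_uplus b by blast
    fix p x assume p: "p \<in> Op" and x: "x \<in> (\<lambda>l. l \<oplus> b) ` L"
    then obtain l where l: "l \<in> L" "x = l \<oplus> b" by blast
    have "p \<oplus> x = (p \<oplus> l) \<oplus> b" using l LO uplus_assoc[OF Ob[OF p] Ob[of l] Ob[OF b]] by auto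
    moreover have "p \<oplus> l \<in> L" using leftidealD(3)[OF li p l(1)] .
    ultimately show "p \<oplus> x \<in> (\<lambda>l. l \<oplus> b) ` L" by blast
  qed
  have "L' = (\<lambda>l. l \<oplus> b) ` L" if L': "leftideal S L'" "L' \<subseteq> (\<lambda>l. l \<oplus> b) ` L" for L'
  proof -
    define M0 where "M0 = {c\<in>L. c \<oplus> b \<in> L'}"
    obtain x where x: "x \<in> L'" using leftidealD(1)[OF L'(1)] by blast
    then obtain c where c: "c \<in> L" "x = c \<oplus> b" using L'(2) by blast
    have "leftideal S M0" unfolding leftideal_def
    proof (intro conjI ballI)
      show "M0 \<noteq> {}" unfolding M0_def using c x by blast
      show "M0 \<subseteq> Op" unfolding M0_def using LO by blast
      fix p d assume p: "p \<in> Op" and d: "d \<in> M0"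
      then have dL: "d \<in> L" and dL': "d \<oplus> b \<in> L'" unfolding M0_def by auto
      have "(p \<oplus> d) \<oplus> b = p \<oplus> (d \<oplus> b)" using uplus_assoc[OF Ob[OF p] Ob[of d] Ob[OF b]] dL LO by auto
      then have "(p \<oplus> d) \<oplus> b \<in> L'" using leftidealD(3)[OF L'(1) p dL'] by simp
      then show "p \<oplus> d \<in> M0" unfolding M0_def using leftidealD(3)[OF li p dL] by blast
    qed
    moreover have "M0 \<subseteq> L" unfolding M0_def by blast
    ultimately have "M0 = L" using L unfolding minleft_def by blast
    then have "(\<lambda>l. l \<oplus> b) ` L \<subseteq> L'" unfolding M0_def by blast
    then show ?thesis using L'(2) by blast
  qed
  then show ?thesis unfolding minleft_def using li2 by blast
qed

lemma minleft_sub_ideal: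
  assumes L: "minleft S L" and I: "is_ideal S Op I"
  shows "L \<subseteq> I"
proof -
  have li: "leftideal S L" using L unfolding minleft_def by blast
  obtain i where i: "i \<in> I" using I unfolding is_ideal_def by blast
  have iO: "i \<in> Op" using i I unfolding is_ideal_def by blast
  obtain l where l: "l \<in> L" using leftidealD(1)[OF li] by blast
  have lO: "l \<in> Op" using l leftidealD(2)[OF li] by blast
  have "i \<oplus> l \<in> L" using leftidealD(3)[OF li iO l] .
  moreover have "i \<oplus> l \<in> I" using I i lO unfolding is_ideal_def by blast
  ultimately have ne: "L \<inter> I \<noteq> {}" by blast
  have "leftideal S (L \<inter> I)" unfolding leftideal_def
  proof (intro conjI ballI)
    show "L \<inter> I \<noteq> {}" using ne .
    show "L \<inter> I \<subseteq> Op" using leftidealD(2)[OF li] by blast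
    fix p x assume p: "p \<in> Op" and x: "x \<in> L \<inter> I"
    have "p \<oplus> x \<in> L" using leftidealD(3)[OF li p] x by blast
    moreover have "p \<oplus> x \<in> I" using I p x unfolding is_ideal_def by blast
    ultimately show "p \<oplus> x \<in> L \<inter> I" by blast
  qed
  then have "L \<inter> I = L" using L unfolding minleft_def by blast
  then show ?thesis by blast
qed

lemma O_ideal: "is_ideal S Op Op"
  unfolding is_ideal_def using Oplus_ne Oplus_uplus by blast

lemma K_sub: "K \<subseteq> Op"
  unfolding Kideal_def using O_ideal by blast

lemma minleft_K: "minleft S L \<Longrightarrow> L \<subseteq> K"
  unfolding Kideal_def using minleft_sub_ideal by blast

lemma K_ne: "K \<noteq> {}"
proof -
  obtain L where "minleft S L" using minleft_exists by blast
  then have "L \<subseteq> K" "L \<noteq> {}" using minleft_K[of L] leftidealD(1)[OF minleftD] by auto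
  then show ?thesis by blast
qed

lemma K_left: "p \<in> Op \<Longrightarrow> q \<in> K \<Longrightarrow> p \<oplus> q \<in> K"
  unfolding Kideal_def is_ideal_def by blast
lemma K_right: "p \<in> Op \<Longrightarrow> q \<in> K \<Longrightarrow> q \<oplus> p \<in> K"
  unfolding Kideal_def is_ideal_def by blast

lemma K_prop:
  assumes q: "q \<in> K"
  shows "q \<in> (\<lambda>w. w \<oplus> q) ` Op \<and> (\<forall>r\<in>(\<lambda>w. w \<oplus> q) ` Op. \<exists>w\<in>Op. w \<oplus> r = q)"
proof -
  obtain L0 where L0: "minleft S L0" using minleft_exists by blast
  have li0: "leftideal S L0" using L0 unfolding minleft_def by blast
  have L0Op: "L0 \<subseteq> Op" using leftidealD(2)[OF li0] .
  define J where "J = {a \<oplus> b | a b. a \<in> L0 \<and> b \<in> Op}"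
  have "is_ideal S Op J" unfolding is_ideal_def
  proof (intro conjI ballI)
    obtain a b where "a \<in> L0" "b \<in> Op" using leftidealD(1)[OF li0] Oplus_ne by blast
    then show "J \<noteq> {}" unfolding J_def by blast
    show "J \<subseteq> Op"
    proof
      fix x assume "x \<in> J"
      then obtain a b where "a \<in> L0" "b \<in> Op" "x = a \<oplus> b" unfolding J_def by blast
      then show "x \<in> Op" using L0Op Oplus_uplus[of a b] by blast
    qed
    fix p x assume p: "p \<in> Op" and x: "x \<in> J"
    then obtain a b where ab: "a \<in> L0" "b \<in> Op" "x = a \<oplus> b" unfolding J_def by blast
    have aO: "a \<in> Op" using ab L0Op by blast
    have "p \<oplus> x = (p \<oplus> a) \<oplus> b" using ab uplus_assoc[OF Ob[OF p] Ob[OF aO] Ob[OF ab(2)]] by simp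
    moreover have "p \<oplus> a \<in> L0" using leftidealD(3)[OF li0 p ab(1)] .
    ultimately show "p \<oplus> x \<in> J" unfolding J_def using ab(2) by force
    have "x \<oplus> p = a \<oplus> (b \<oplus> p)" using ab uplus_assoc[OF Ob[OF aO] Ob[OF ab(2)] Ob[OF p]] by simp
    moreover have "b \<oplus> p \<in> Op" using Oplus_uplus[OF ab(2) p] .
    ultimately show "x \<oplus> p \<in> J" unfolding J_def using ab(1) by force
  qed
  then have "q \<in> J" using q unfolding Kideal_def by blast
  then obtain a b where ab: "a \<in> L0" "b \<in> Op" "q = a \<oplus> b" unfolding J_def by blast
  have aO: "a \<in> Op" using ab L0Op by blast
  define L1 where "L1 = (\<lambda>l. l \<oplus> b) ` L0"
  have L1: "minleft S L1" unfolding L1_def using minleft_shift[OF L0 ab(2)] .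
  have li1: "leftideal S L1" using L1 unfolding minleft_def by blast
  have qO: "q \<in> Op" using q K_sub by blast
  have qL1: "q \<in> L1" unfolding L1_def using ab by blast
  have orb: "(\<lambda>w. w \<oplus> r) ` Op = L1" if r: "r \<in> L1" for r
  proof -
    have rO: "r \<in> Op" using r leftidealD(2)[OF li1] by blast
    have "(\<lambda>w. w \<oplus> r) ` Op \<subseteq> L1" using orbit_sub[OF li1 r] .
    then show ?thesis using L1 orbit_left[OF rO] unfolding minleft_def by blast
  qed
  have "q \<in> (\<lambda>w. w \<oplus> q) ` Op" using orb[OF qL1] qL1 by simp
  moreover have "\<exists>w\<in>Op. w \<oplus> r = q" if r: "r \<in> (\<lambda>w. w \<oplus> q) ` Op" for r
  proof -
    have "r \<in> L1" using r orb[OF qL1] by simp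
    then have "q \<in> (\<lambda>w. w \<oplus> r) ` Op" using orb qL1 by simp
    then show ?thesis by force
  qed
  ultimately show ?thesis by blast
qed

lemma ellis:
  assumes M: "closedb S M" "M \<noteq> {}" "semigrp S M"
  shows "\<exists>p\<in>M. p \<oplus> p = p"
proof -
  define \<FF> where "\<FF> = {N. N \<subseteq> M \<and> closedb S N \<and> N \<noteq> {} \<and> semigrp S N}"
  have ne: "\<FF> \<noteq> {}" unfolding \<FF>_def using M by blast
  have "\<exists>N\<in>\<FF>. \<forall>X\<in>\<FF>. X \<subseteq> N \<longrightarrow> X = N"
  proof (rule zorn_min[OF ne])
    fix \<CC> assume sub: "\<CC> \<subseteq> \<FF>" and cne: "\<CC> \<noteq> {}" and ch: "\<forall>X\<in>\<CC>. \<forall>Y\<in>\<CC>. X \<subseteq> Y \<or> Y \<subseteq> X"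
    have F: "X \<subseteq> M" "closedb S X" "X \<noteq> {}" "semigrp S X" if "X \<in> \<CC>" for X
      using sub that unfolding \<FF>_def by blast+
    have "\<exists>p. \<forall>C\<in>\<CC>. p \<in> C"
    proof (rule compact_dir[OF cne])
      show "closedb S C" if "C \<in> \<CC>" for C using F(2)[OF that] .
      show "C \<noteq> {}" if "C \<in> \<CC>" for C using F(3)[OF that] .
      show "\<exists>C3\<in>\<CC>. C3 \<subseteq> C1 \<inter> C2" if "C1 \<in> \<CC>" "C2 \<in> \<CC>" for C1 C2
      proof (cases "C1 \<subseteq> C2")
        case True then show ?thesis using that by blast
      next
        case False then have "C2 \<subseteq> C1" using ch that by blast
        then show ?thesis using that by blast
      qed
    qed
    then have "\<Inter>\<CC> \<noteq> {}" by blast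
    moreover have "\<Inter>\<CC> \<subseteq> M" using cne F(1) by blast
    moreover have "semigrp S (\<Inter>\<CC>)" unfolding semigrp_def using F(4) unfolding semigrp_def by blast
    moreover have "closedb S (\<Inter>\<CC>)" using closed_Inter[OF cne] F(2) by blast
    ultimately show "\<Inter>\<CC> \<in> \<FF>" unfolding \<FF>_def by blast
  qed
  then obtain N where N: "N \<in> \<FF>" "\<forall>X\<in>\<FF>. X \<subseteq> N \<longrightarrow> X = N" by blast
  have NM: "N \<subseteq> M" and cN: "closedb S N" and neN: "N \<noteq> {}" and sN: "semigrp S N"
    using N(1) unfolding \<FF>_def by blast+
  have Nb: "N \<subseteq> betaS S" using closed_sub[OF cN] .
  obtain p where p: "p \<in> N" using neN by blast
  have pb: "p \<in> betaS S" using p Nb by blast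
  have "(\<lambda>c. c \<oplus> p) ` N \<in> \<FF>" unfolding \<FF>_def
  proof (intro CollectI conjI)
    show "(\<lambda>c. c \<oplus> p) ` N \<subseteq> M" using sN p NM unfolding semigrp_def by blast
    show "closedb S ((\<lambda>c. c \<oplus> p) ` N)" using image_closed[OF cN pb] .
    show "(\<lambda>c. c \<oplus> p) ` N \<noteq> {}" using neN by blast
    show "semigrp S ((\<lambda>c. c \<oplus> p) ` N)" unfolding semigrp_def
    proof (intro ballI)
      fix x y assume "x \<in> (\<lambda>c. c \<oplus> p) ` N" "y \<in> (\<lambda>c. c \<oplus> p) ` N"
      then obtain a b where ab: "a \<in> N" "b \<in> N" "x = a \<oplus> p" "y = b \<oplus> p" by blast
      have ap: "a \<oplus> p \<in> N" using sN ab p unfolding semigrp_def by blast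
      have "x \<oplus> y = ((a \<oplus> p) \<oplus> b) \<oplus> p"
        using ab uplus_assoc[OF Nb[THEN subsetD, OF ap] Nb[THEN subsetD, OF ab(2)] pb] by simp
      moreover have "(a \<oplus> p) \<oplus> b \<in> N" using sN ap ab(2) unfolding semigrp_def by blast
      ultimately show "x \<oplus> y \<in> (\<lambda>c. c \<oplus> p) ` N" by blast
    qed
  qed
  moreover have "(\<lambda>c. c \<oplus> p) ` N \<subseteq> N" using sN p unfolding semigrp_def by blast
  ultimately have Np: "(\<lambda>c. c \<oplus> p) ` N = N" using N(2) by blast
  define Q where "Q = {q\<in>N. q \<oplus> p = p}"
  have "Q \<in> \<FF>" unfolding \<FF>_def
  proof (intro CollectI conjI)
    show "Q \<subseteq> M" unfolding Q_def using NM by blast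
    have "p \<in> (\<lambda>c. c \<oplus> p) ` N" using p Np by simp
    then obtain q where "q \<in> N" "q \<oplus> p = p" by blast
    then show "Q \<noteq> {}" unfolding Q_def by blast
    show "semigrp S Q" unfolding semigrp_def Q_def
    proof (intro ballI CollectI conjI)
      fix x y assume x: "x \<in> {q \<in> N. q \<oplus> p = p}" and y: "y \<in> {q \<in> N. q \<oplus> p = p}"
      then have xN: "x \<in> N" and yN: "y \<in> N" by auto
      show "x \<oplus> y \<in> N" using sN xN yN unfolding semigrp_def by blast
      have "(x \<oplus> y) \<oplus> p = x \<oplus> (y \<oplus> p)" using uplus_assoc xN yN Nb pb by blast
      then show "(x \<oplus> y) \<oplus> p = p" using x y by simp
    qed
    show "closedb S Q" unfolding closedb_def
    proof (intro conjI subsetI)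
      show "x \<in> betaS S" if "x \<in> Q" for x using that Nb unfolding Q_def by blast
      fix x assume x: "x \<in> betaCl S Q"
      have xN: "x \<in> N" using closedD[OF cN] cl_mono[of Q N S] x unfolding Q_def by blast
      have "x \<oplus> p \<in> betaCl S ((\<lambda>c. c \<oplus> p) ` Q)" using cont_right[OF x pb] .
      moreover have "(\<lambda>c. c \<oplus> p) ` Q \<subseteq> {p}" unfolding Q_def by blast
      ultimately have "x \<oplus> p \<in> betaCl S {p}" using cl_mono by blast
      then have "x \<oplus> p = p" using closedD[OF closed_single[OF pb]] by blast
      then show "x \<in> Q" unfolding Q_def using xN by blast
    qed
  qed
  moreover have "Q \<subseteq> N" unfolding Q_def by blast
  ultimately have "Q = N" using N(2) by blast
  then have "p \<oplus> p = p" using p unfolding Q_def by blast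
  then show ?thesis using p NM by blast
qed

lemma clK_semigrp: "semigrp S (betaCl S K)"
  unfolding semigrp_def
proof (intro ballI)
  fix p r assume p: "p \<in> betaCl S K" and r: "r \<in> betaCl S K"
  have rO: "r \<in> Op" using r cl_mono[OF K_sub, of S] closedD[OF closed_Oplus] by blast
  have "p \<oplus> r \<in> betaCl S ((\<lambda>c. c \<oplus> r) ` K)" using cont_right[OF p Ob[OF rO]] .
  moreover have "(\<lambda>c. c \<oplus> r) ` K \<subseteq> K" using K_right[OF rO] by blast
  ultimately show "p \<oplus> r \<in> betaCl S K" using cl_mono by blast
qed

end


context dss begin

lemma orbit_q:
  assumes q: "q \<in> K"
  shows "q \<in> (\<lambda>w. w \<oplus> q) ` Op" "\<And>r. r \<in> (\<lambda>w. w \<oplus> q) ` Op \<Longrightarrow> \<exists>w\<in>Op. w \<oplus> r = q"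
  using K_prop[OF q] by blast+

lemma PS_step1:
  assumes q: "q \<in> K" and Bq: "B \<in> q" and e: "e > 0"
  shows "\<exists>F. finite F \<and> F \<subseteq> {0<..<e} \<inter> S \<and> (\<forall>r\<in>(\<lambda>w. w \<oplus> q) ` Op. (\<Union>t\<in>F. lshift S t B) \<in> r)"
proof (rule ccontr)
  let ?L = "(\<lambda>w. w \<oplus> q) ` Op"
  define D where "D F = (\<Union>t\<in>F. lshift S t B)" for F
  have DS: "D F \<subseteq> S" for F unfolding D_def using lshift_sub by blast
  assume nt: "\<not> ?thesis"
  have nF: "\<exists>r\<in>?L. D F \<notin> r" if "finite F" "F \<subseteq> {0<..<e} \<inter> S" for F
  proof (rule ccontr)
    assume "\<not> (\<exists>r\<in>?L. D F \<notin> r)"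
    then have "\<forall>r\<in>?L. (\<Union>t\<in>F. lshift S t B) \<in> r" unfolding D_def by blast
    then show False using nt that by blast
  qed
  have qO: "q \<in> Op" using q K_sub by blast
  have Lb: "?L \<subseteq> betaS S" using closed_sub[OF orbit_closed[OF qO]] .
  define CF where "CF F = ?L \<inter> {r\<in>betaS S. S - D F \<in> r}" for F
  define \<CC> where "\<CC> = {CF F | F. finite F \<and> F \<subseteq> {0<..<e} \<inter> S}"
  have CCI: "CF F \<in> \<CC>" if "finite F" "F \<subseteq> {0<..<e} \<inter> S" for F
    unfolding \<CC>_def using that by (intro CollectI exI[of _ F] conjI refl)
  have "\<exists>r. \<forall>C\<in>\<CC>. r \<in> C"
  proof (rule compact_dir)
    have "finite {}" "{} \<subseteq> {0<..<e} \<inter> S" by auto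
    then have "CF {} \<in> \<CC>" by (rule CCI)
    then show "\<CC> \<noteq> {}" by blast
    fix C assume "C \<in> \<CC>"
    then obtain F where F: "finite F" "F \<subseteq> {0<..<e} \<inter> S" "C = CF F" unfolding \<CC>_def by blast
    show "closedb S C" unfolding F(3) CF_def using closed_Int[OF orbit_closed[OF qO] closed_basic] .
    obtain r where r: "r \<in> ?L" "D F \<notin> r" using nF[OF F(1,2)] by blast
    have "S - D F \<in> r" using r Lb uf_compl[of S r "D F"] DS by (auto simp: betaS_iff)
    then show "C \<noteq> {}" using r Lb unfolding F(3) CF_def by blast
  next
    fix C1 C2 assume "C1 \<in> \<CC>" "C2 \<in> \<CC>"
    then obtain F1 F2 where F: "finite F1" "F1 \<subseteq> {0<..<e} \<inter> S" "C1 = CF F1"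
      "finite F2" "F2 \<subseteq> {0<..<e} \<inter> S" "C2 = CF F2" unfolding \<CC>_def by blast
    have "CF (F1 \<union> F2) \<in> \<CC>" using F by (intro CCI) auto
    moreover have "CF (F1 \<union> F2) \<subseteq> C1 \<inter> C2"
    proof
      fix r assume r: "r \<in> CF (F1 \<union> F2)"
      then have rb: "r \<in> betaS S" and m: "S - D (F1 \<union> F2) \<in> r" and rL: "r \<in> ?L" unfolding CF_def by auto
      have ur: "is_ultrafilter S r" using rb by (simp add: betaS_iff)
      have "S - D F1 \<in> r" using uf_mono[OF ur m, of "S - D F1"] unfolding D_def by blast
      moreover have "S - D F2 \<in> r" using uf_mono[OF ur m, of "S - D F2"] unfolding D_def by blast
      ultimately show "r \<in> C1 \<inter> C2" unfolding F(3,6) CF_def using rb rL by blast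
    qed
    ultimately show "\<exists>C3\<in>\<CC>. C3 \<subseteq> C1 \<inter> C2" by blast
  qed
  then obtain r0 where r0: "\<forall>C\<in>\<CC>. r0 \<in> C" by blast
  have "finite {}" "{} \<subseteq> {0<..<e} \<inter> S" by auto
  then have "CF {} \<in> \<CC>" by (rule CCI)
  then have "r0 \<in> CF {}" using r0 by blast
  then have r0L: "r0 \<in> ?L" unfolding CF_def by simp
  have r0b: "r0 \<in> betaS S" using r0L Lb by blast
  have ur0: "is_ultrafilter S r0" using r0b by (simp add: betaS_iff)
  have nt: "lshift S t B \<notin> r0" if t: "t \<in> {0<..<e} \<inter> S" for t
  proof
    assume tin: "lshift S t B \<in> r0"
    have "finite {t}" "{t} \<subseteq> {0<..<e} \<inter> S" using t by auto
    then have "CF {t} \<in> \<CC>" by (rule CCI)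
    then have "r0 \<in> CF {t}" using r0 by blast
    then have "S - D {t} \<in> r0" unfolding CF_def by simp
    moreover have "D {t} = lshift S t B" unfolding D_def by simp
    ultimately have m: "S - lshift S t B \<in> r0" by simp
    have "lshift S t B \<inter> (S - lshift S t B) \<in> r0" by (rule uf_int[OF ur0 tin m])
    then show False using uf_ne[OF ur0] by blast
  qed
  obtain w where w: "w \<in> Op" "w \<oplus> r0 = q" using orbit_q(2)[OF q r0L] by blast
  have "B \<in> w \<oplus> r0" using w Bq by simp
  then have E: "{x\<in>S. lshift S x B \<in> r0} \<in> w" unfolding uplus_def by simp
  have uw: "is_ultrafilter S w" using w(1) Ob by (simp add: betaS_iff)
  have "S \<inter> {0<..<e} \<in> w" using w(1) e unfolding Oplus_iff by blast
  then have "{x\<in>S. lshift S x B \<in> r0} \<inter> (S \<inter> {0<..<e}) \<in> w" using uf_int[OF uw E] by blast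
  then obtain t where "t \<in> {x\<in>S. lshift S x B \<in> r0} \<inter> (S \<inter> {0<..<e})" using uf_ne[OF uw] by blast
  then show False using nt by blast
qed

lemma PS_step2:
  assumes q: "q \<in> K" and DF: "\<forall>r\<in>(\<lambda>w. w \<oplus> q) ` Op. D \<in> r" and DS: "D \<subseteq> S"
  shows "\<exists>d>0. \<forall>s\<in>S \<inter> {0<..<d}. lshift S s D \<in> q"
proof (rule ccontr)
  assume "\<not> ?thesis"
  then have nd: "\<And>d. d > 0 \<Longrightarrow> \<exists>s\<in>S \<inter> {0<..<d}. lshift S s D \<notin> q" by blast
  define E where "E = {s\<in>S. lshift S s D \<notin> q}"
  have "\<forall>e>0. E \<inter> {0<..<e} \<noteq> {}" unfolding E_def using nd by blast
  then obtain v where v: "v \<in> Op" "E \<in> v" using O_exists_with[of E] unfolding E_def by blast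
  have qO: "q \<in> Op" using q K_sub by blast
  have qL: "q \<in> (\<lambda>w. w \<oplus> q) ` Op" using orbit_q(1)[OF q] .
  have "v \<oplus> q \<in> (\<lambda>w. w \<oplus> q) ` Op" using leftidealD(3)[OF orbit_left[OF qO] v(1) qL] .
  then have "D \<in> v \<oplus> q" using DF by blast
  then have "{x\<in>S. lshift S x D \<in> q} \<in> v" unfolding uplus_def by simp
  moreover have uv: "is_ultrafilter S v" using v(1) Ob by (simp add: betaS_iff)
  ultimately have "{x\<in>S. lshift S x D \<in> q} \<inter> E \<in> v" using uf_int v(2) by blast
  moreover have "{x\<in>S. lshift S x D \<in> q} \<inter> E = {}" unfolding E_def by blast
  ultimately show False using uf_ne[OF uv] by blast
qed

lemma finite_idx:
  assumes G: "finite G" "G \<subseteq> S" and dl: "\<And>n. n \<ge> 1 \<Longrightarrow> \<delta> n < 1 / real n"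
  shows "finite {(g, n). g \<in> G \<and> n \<ge> 1 \<and> g < \<delta> n}"
proof -
  have "{(g, n). g \<in> G \<and> n \<ge> 1 \<and> g < \<delta> n} \<subseteq> (\<Union>g\<in>G. {g} \<times> {..nat \<lceil>1 / g\<rceil>})"
  proof
    fix x assume "x \<in> {(g, n). g \<in> G \<and> n \<ge> 1 \<and> g < \<delta> n}"
    then obtain g n where x: "x = (g, n)" "g \<in> G" "n \<ge> 1" "g < \<delta> n" by blast
    have gp: "g > 0" using x(2) G(2) S_pos by blast
    have "g < 1 / real n" using x(3,4) dl[of n] by linarith
    then have "g * real n < 1" using x(3) by (simp add: field_simps)
    then have "real n < 1 / g" using gp by (simp add: field_simps)
    then have "real n < real (nat \<lceil>1 / g\<rceil>)" using real_nat_ceiling_ge[of "1/g"] by linarith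
    then have "n \<le> nat \<lceil>1 / g\<rceil>" by simp
    then show "x \<in> (\<Union>g\<in>G. {g} \<times> {..nat \<lceil>1 / g\<rceil>})" using x by blast
  qed
  moreover have "finite (\<Union>g\<in>G. {g} \<times> {..nat \<lceil>1 / g\<rceil>})" using G(1) by blast
  ultimately show ?thesis by (rule finite_subset)
qed

lemma PS_from_K:
  assumes q: "q \<in> K" and Bq: "B \<in> q"
  shows "piecewise_syndetic_near_zero S B"
proof -
  let ?L = "(\<lambda>w. w \<oplus> q) ` Op"
  have qO: "q \<in> Op" using q K_sub by blast
  have uq: "is_ultrafilter S q" using qO Ob by (simp add: betaS_iff)
  have qL: "q \<in> ?L" using orbit_q(1)[OF q] .
  have "\<forall>n. \<exists>x. n \<ge> 1 \<longrightarrow> (finite (fst x) \<and> fst x \<noteq> {} \<and> fst x \<subseteq> {0<..<1 / real n} \<inter> S \<and>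
          0 < snd x \<and> snd x < 1 / real n \<and>
          (\<forall>s\<in>S \<inter> {0<..<snd x}. lshift S s (\<Union>t\<in>fst x. lshift S t B) \<in> q))"
  proof
    fix n :: nat
    show "\<exists>x. n \<ge> 1 \<longrightarrow> (finite (fst x) \<and> fst x \<noteq> {} \<and> fst x \<subseteq> {0<..<1 / real n} \<inter> S \<and>
          0 < snd x \<and> snd x < 1 / real n \<and>
          (\<forall>s\<in>S \<inter> {0<..<snd x}. lshift S s (\<Union>t\<in>fst x. lshift S t B) \<in> q))"
    proof (cases "n \<ge> 1")
      case False then show ?thesis by blast
    next
      case True
      have e: "1 / real n > 0" using True by simp
      obtain F where F: "finite F" "F \<subseteq> {0<..<1 / real n} \<inter> S" "\<forall>r\<in>?L. (\<Union>t\<in>F. lshift S t B) \<in> r"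
        using PS_step1[OF q Bq e] by blast
      have Fne: "F \<noteq> {}" using F(3) qL uf_ne[OF uq] by force
      obtain d where d: "d > 0" "\<forall>s\<in>S \<inter> {0<..<d}. lshift S s (\<Union>t\<in>F. lshift S t B) \<in> q"
        using PS_step2[OF q F(3)] lshift_sub by blast
      define d' where "d' = min d (1 / (2 * real n))"
      have hn: "real n > 0" using True by simp
      have h2: "1 / (2 * real n) < 1 / real n" using hn by (simp add: field_simps)
      have h3: "0 < 1 / (2 * real n)" using hn by simp
      have d': "0 < d'" "d' < 1 / real n" "d' \<le> d"
        using d(1) h2 h3 min.cobounded1[of d "1 / (2 * real n)"] min.cobounded2[of d "1 / (2 * real n)"]
        unfolding d'_def by (simp, linarith, simp)
      have "\<forall>s\<in>S \<inter> {0<..<d'}. lshift S s (\<Union>t\<in>F. lshift S t B) \<in> q" using d(2) d'(3) by auto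
      then show ?thesis using F Fne d' by (intro exI[of _ "(F, d')"]) simp
    qed
  qed
  then obtain x where x: "\<forall>n. n \<ge> 1 \<longrightarrow> (finite (fst (x n)) \<and> fst (x n) \<noteq> {} \<and> fst (x n) \<subseteq> {0<..<1 / real n} \<inter> S \<and>
          0 < snd (x n) \<and> snd (x n) < 1 / real n \<and>
          (\<forall>s\<in>S \<inter> {0<..<snd (x n)}. lshift S s (\<Union>t\<in>fst (x n). lshift S t B) \<in> q))"
    by (rule choice[THEN exE]) blast
  define F where "F n = fst (x n)" for n
  define \<delta> where "\<delta> n = snd (x n)" for n
  define D where "D n = (\<Union>t\<in>F n. lshift S t B)" for n
  have xn: "finite (F n) \<and> F n \<noteq> {} \<and> F n \<subseteq> {0<..<1 / real n} \<inter> S \<and> 0 < \<delta> n \<and> \<delta> n < 1 / real n \<and>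
          (\<forall>s\<in>S \<inter> {0<..<\<delta> n}. lshift S s (D n) \<in> q)" if "n \<ge> 1" for n
    using mp[OF spec[OF x, of n] that] unfolding F_def \<delta>_def D_def by simp
  have Fp: "\<And>n. n \<ge> 1 \<Longrightarrow> finite (F n) \<and> F n \<noteq> {} \<and> F n \<subseteq> {0<..<1 / real n} \<inter> S \<and> 0 < \<delta> n \<and> \<delta> n < 1 / real n"
    using xn by simp
  have Dq: "\<And>n s. n \<ge> 1 \<Longrightarrow> s \<in> S \<Longrightarrow> 0 < s \<Longrightarrow> s < \<delta> n \<Longrightarrow> lshift S s (D n) \<in> q"
    using xn by simp
  show ?thesis unfolding piecewise_syndetic_near_zero_def
  proof (intro exI[of _ F] exI[of _ \<delta>] conjI)
    show "\<forall>n\<ge>1. finite (F n) \<and> F n \<noteq> {} \<and> F n \<subseteq> {0<..<1 / real n} \<inter> S \<and> 0 < \<delta> n \<and> \<delta> n < 1 / real n"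
      using Fp by blast
  next
    show "\<forall>G. finite G \<and> G \<noteq> {} \<and> G \<subseteq> S \<longrightarrow>
           (\<forall>\<mu>>0. \<exists>x\<in>{0<..<\<mu>} \<inter> S. \<forall>n\<ge>1.
              (\<lambda>g. g + x) ` (G \<inter> {0<..<\<delta> n}) \<subseteq> (\<Union>t\<in>F n. lshift S t B))"
  proof (intro allI impI)
    fix G :: "real set" and \<mu> :: real
    assume G: "finite G \<and> G \<noteq> {} \<and> G \<subseteq> S" and mu: "0 < \<mu>"
    define I where "I = {(g, n). g \<in> G \<and> n \<ge> 1 \<and> g < \<delta> n}"
    have fI: "finite I" unfolding I_def using finite_idx[of G \<delta>] G Fp by blast
    have "S \<inter> (\<Inter>i\<in>I. lshift S (fst i) (D (snd i))) \<in> q"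
    proof (rule uf_Inter[OF fI uq], rule ballI)
      fix i assume "i \<in> I"
      then obtain g n where i: "i = (g, n)" "g \<in> G" "n \<ge> 1" "g < \<delta> n" unfolding I_def by blast
      have "g \<in> S" using i(2) G by blast
      then show "lshift S (fst i) (D (snd i)) \<in> q" using Dq[OF i(3)] i S_pos by simp
    qed
    moreover have "S \<inter> {0<..<\<mu>} \<in> q" using qO mu unfolding Oplus_iff by blast
    ultimately have "S \<inter> (\<Inter>i\<in>I. lshift S (fst i) (D (snd i))) \<inter> (S \<inter> {0<..<\<mu>}) \<in> q" using uf_int[OF uq] by blast
    then obtain y where y: "y \<in> S \<inter> (\<Inter>i\<in>I. lshift S (fst i) (D (snd i))) \<inter> (S \<inter> {0<..<\<mu>})"
      using uf_ne[OF uq] by blast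
    show "\<exists>x\<in>{0<..<\<mu>} \<inter> S. \<forall>n\<ge>1. (\<lambda>g. g + x) ` (G \<inter> {0<..<\<delta> n}) \<subseteq> (\<Union>t\<in>F n. lshift S t B)"
    proof (intro bexI allI impI subsetI)
      show "y \<in> {0<..<\<mu>} \<inter> S" using y by blast
      fix n :: nat and z assume n: "n \<ge> 1" and z: "z \<in> (\<lambda>g. g + y) ` (G \<inter> {0<..<\<delta> n})"
      then obtain g where g: "g \<in> G" "0 < g" "g < \<delta> n" "z = g + y" by auto
      have "(g, n) \<in> I" unfolding I_def using g n by blast
      then have "y \<in> lshift S g (D n)" using y by fastforce
      then have "g + y \<in> D n" unfolding lshift_def by blast
      then show "z \<in> (\<Union>t\<in>F n. lshift S t B)" using g(4) unfolding D_def by blast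
    qed
  qed
  qed
qed

end


context dss begin

lemma K_from_PS:
  assumes BS: "B \<subseteq> S" and ps: "piecewise_syndetic_near_zero S B"
  shows "\<exists>q\<in>K. B \<in> q"
proof -
  obtain F :: "nat \<Rightarrow> real set" and \<delta> :: "nat \<Rightarrow> real" where
    FG: "(\<forall>n\<ge>1. finite (F n) \<and> F n \<noteq> {} \<and> F n \<subseteq> {0<..<1 / real n} \<inter> S \<and> 0 < \<delta> n \<and> \<delta> n < 1 / real n) \<and>
    (\<forall>G. finite G \<and> G \<noteq> {} \<and> G \<subseteq> S \<longrightarrow>
           (\<forall>\<mu>>0. \<exists>x\<in>{0<..<\<mu>} \<inter> S. \<forall>n\<ge>1.
              (\<lambda>g. g + x) ` (G \<inter> {0<..<\<delta> n}) \<subseteq> (\<Union>t\<in>F n. lshift S t B)))"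
    using ps unfolding piecewise_syndetic_near_zero_def by (elim exE) (rule that)
  note Fp = conjunct1[OF FG] and Gp = conjunct2[OF FG]
  define D where "D n = (\<Union>t\<in>F n. lshift S t B)" for n
  have DS: "D n \<subseteq> S" for n unfolding D_def using lshift_sub by blast
  define X where "X G \<mu> = {x\<in>{0<..<\<mu>} \<inter> S. \<forall>n\<ge>1. (\<lambda>g. g + x) ` (G \<inter> {0<..<\<delta> n}) \<subseteq> D n}" for G \<mu>
  have Xne: "X G \<mu> \<noteq> {}" if "finite G" "G \<noteq> {}" "G \<subseteq> S" "\<mu> > 0" for G \<mu>
  proof -
    have "\<exists>x\<in>{0<..<\<mu>} \<inter> S. \<forall>n\<ge>1. (\<lambda>g. g + x) ` (G \<inter> {0<..<\<delta> n}) \<subseteq> (\<Union>t\<in>F n. lshift S t B)"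
      using mp[OF spec[OF Gp, of G]] that by blast
    then show ?thesis unfolding X_def D_def by blast
  qed
  define \<B> where "\<B> = {X G \<mu> | G \<mu>. finite G \<and> G \<noteq> {} \<and> G \<subseteq> S \<and> \<mu> > 0}"
  have BI: "X G \<mu> \<in> \<B>" if "finite G" "G \<noteq> {}" "G \<subseteq> S" "\<mu> > 0" for G \<mu>
    unfolding \<B>_def using that by (intro CollectI exI[of _ G] exI[of _ \<mu>] conjI refl)
  obtain s0 where s0: "s0 \<in> S" using S_small[of 1] by auto
  have "\<exists>r. is_ultrafilter S r \<and> \<B> \<subseteq> r"
  proof (rule uf_exists)
    show "\<B> \<subseteq> Pow S" unfolding \<B>_def X_def by blast
    have "X {s0} 1 \<in> \<B>" using s0 by (intro BI) auto
    then show "\<B> \<noteq> {}" by blast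
    show "{} \<notin> \<B>"
    proof
      assume "{} \<in> \<B>"
      then obtain G \<mu> where "{} = X G \<mu>" "finite G" "G \<noteq> {}" "G \<subseteq> S" "\<mu> > 0" unfolding \<B>_def by blast
      then show False using Xne by metis
    qed
    show "\<forall>A\<in>\<B>. \<forall>C\<in>\<B>. \<exists>E\<in>\<B>. E \<subseteq> A \<inter> C"
    proof (intro ballI)
      fix A C assume "A \<in> \<B>" "C \<in> \<B>"
      then obtain G1 \<mu>1 G2 \<mu>2 where g: "A = X G1 \<mu>1" "finite G1" "G1 \<noteq> {}" "G1 \<subseteq> S" "\<mu>1 > 0"
        "C = X G2 \<mu>2" "finite G2" "G2 \<noteq> {}" "G2 \<subseteq> S" "\<mu>2 > 0" unfolding \<B>_def by blast
      have "X (G1 \<union> G2) (min \<mu>1 \<mu>2) \<in> \<B>" using g by (intro BI) auto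
      moreover have "X (G1 \<union> G2) (min \<mu>1 \<mu>2) \<subseteq> A \<inter> C"
      proof
        fix x assume x: "x \<in> X (G1 \<union> G2) (min \<mu>1 \<mu>2)"
        then have x1: "x \<in> {0<..<min \<mu>1 \<mu>2} \<inter> S" and
          x2: "\<And>n. n \<ge> 1 \<Longrightarrow> (\<lambda>g. g + x) ` ((G1 \<union> G2) \<inter> {0<..<\<delta> n}) \<subseteq> D n"
          unfolding X_def by auto
        have "(\<lambda>g. g + x) ` (G1 \<inter> {0<..<\<delta> n}) \<subseteq> D n" if "n \<ge> 1" for n
          using x2[OF that] by blast
        moreover have "(\<lambda>g. g + x) ` (G2 \<inter> {0<..<\<delta> n}) \<subseteq> D n" if "n \<ge> 1" for n
          using x2[OF that] by blast
        ultimately show "x \<in> A \<inter> C" unfolding g(1,6) X_def using x1 by auto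
      qed
      ultimately show "\<exists>E\<in>\<B>. E \<subseteq> A \<inter> C" by blast
    qed
  qed
  then obtain r where ur: "is_ultrafilter S r" and Br: "\<B> \<subseteq> r" by blast
  have rO: "r \<in> Op" unfolding Oplus_iff betaS_iff
  proof (intro conjI allI impI)
    show "is_ultrafilter S r" by (rule ur)
    fix e :: real assume e: "e > 0"
    have "X {s0} e \<in> \<B>" using s0 e by (intro BI) auto
    then have "X {s0} e \<in> r" using Br by blast
    moreover have "X {s0} e \<subseteq> S \<inter> {0<..<e}" unfolding X_def by auto
    ultimately show "S \<inter> {0<..<e} \<in> r" using uf_mono[OF ur, of "X {s0} e"] by blast
  qed
  have Dr: "lshift S g (D n) \<in> r" if n: "n \<ge> 1" and g: "g \<in> S" "0 < g" "g < \<delta> n" for n g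
  proof -
    have "X {g} 1 \<in> \<B>" using g by (intro BI) auto
    then have "X {g} 1 \<in> r" using Br by blast
    moreover have "X {g} 1 \<subseteq> lshift S g (D n)"
    proof
      fix x assume "x \<in> X {g} 1"
      then have "x \<in> S" "(\<lambda>g. g + x) ` ({g} \<inter> {0<..<\<delta> n}) \<subseteq> D n" unfolding X_def using n by auto
      then show "x \<in> lshift S g (D n)" unfolding lshift_def using g by (auto simp: add.commute)
    qed
    ultimately show ?thesis using uf_mono[OF ur, of "X {g} 1"] lshift_sub by blast
  qed
  obtain w where w: "w \<in> K" using K_ne by blast
  have wO: "w \<in> Op" using w K_sub by blast
  have uw: "is_ultrafilter S w" using wO Ob by (simp add: betaS_iff)
  define u where "u = w \<oplus> r"
  have uK: "u \<in> K" unfolding u_def using K_right[OF rO w] .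
  have "u \<in> Op" using uK K_sub by blast
  then have uu: "is_ultrafilter S u" using Ob by (simp add: betaS_iff)
  have Du: "D n \<in> u" if n: "n \<ge> 1" for n
  proof -
    have dp: "\<delta> n > 0" using Fp n by blast
    have "S \<inter> {0<..<\<delta> n} \<subseteq> {x\<in>S. lshift S x (D n) \<in> r}" using Dr[OF n] by auto
    moreover have "S \<inter> {0<..<\<delta> n} \<in> w" using wO dp unfolding Oplus_iff by blast
    ultimately have "{x\<in>S. lshift S x (D n) \<in> r} \<in> w" using uf_mono[OF uw, of "S \<inter> {0<..<\<delta> n}"] by blast
    then show ?thesis unfolding u_def uplus_def using DS by simp
  qed
  define E where "E = {s\<in>S. lshift S s B \<in> u}"
  have "E \<inter> {0<..<e} \<noteq> {}" if e: "e > 0" for e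
  proof -
    obtain n :: nat where n: "n > 0" "inverse (real n) < e" using ex_inverse_of_nat_less[OF e] by blast
    have n1: "n \<ge> 1" using n by simp
    have fin: "finite (F n)" and Fs: "F n \<subseteq> {0<..<1 / real n} \<inter> S" using Fp n1 by blast+
    obtain t where t: "t \<in> F n" "lshift S t B \<in> u" using uf_Union[OF fin uu, of "\<lambda>t. lshift S t B"] Du[OF n1]
      unfolding D_def by blast
    have "t \<in> S" "0 < t" "t < 1 / real n" using t(1) Fs by auto
    then have "t \<in> E \<inter> {0<..<e}" unfolding E_def using t(2) n(2) by (auto simp: field_simps)
    then show ?thesis by blast
  qed
  then obtain v where v: "v \<in> Op" "E \<in> v" using O_exists_with[of E] unfolding E_def by blast
  have "B \<in> v \<oplus> u" unfolding uplus_def using v(2) BS unfolding E_def by simp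
  moreover have "v \<oplus> u \<in> K" using K_left[OF v(1) uK] .
  ultimately show ?thesis by blast
qed

end


context dss begin

lemma dyn_to_qc:
  fixes X :: "'a topology"
  assumes dyn: "dynamical_system S X T" and x: "x \<in> topspace X" and y: "y \<in> topspace X"
    and J: "JIUR0 S X T x y" and U: "is_nbhd X U y" and A: "A = {s\<in>S. T s x \<in> U}"
  shows "quasi_central_near_zero S A"
proof -
  have cont: "\<And>s. s \<in> S \<Longrightarrow> continuous_map X X (T s)" and
    comp: "\<And>s t z. s \<in> S \<Longrightarrow> t \<in> S \<Longrightarrow> z \<in> topspace X \<Longrightarrow> T s (T t z) = T (s + t) z"
    using dyn unfolding dynamical_system_def by blast+
  define BV where "BV V = {s\<in>S. T s x \<in> V \<and> T s y \<in> V}" for V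
  define \<VV> where "\<VV> = {V. openin X V \<and> y \<in> V}"
  have BVS: "BV V \<subseteq> S" for V unfolding BV_def by blast
  have psV: "\<exists>q\<in>K. BV V \<in> q" if V: "V \<in> \<VV>" for V
  proof -
    have "is_nbhd X V y" unfolding is_nbhd_def using V openin_subset unfolding \<VV>_def by blast
    then have "piecewise_syndetic_near_zero S (BV V)" using J unfolding JIUR0_def BV_def by blast
    then show ?thesis using K_from_PS[OF BVS] by blast
  qed
  have Kb: "K \<subseteq> betaS S" using K_sub Oplus_sub by blast
  define CV where "CV V = betaCl S K \<inter> {p\<in>betaS S. BV V \<in> p}" for V
  define \<CC> where "\<CC> = CV ` \<VV>"
  define M where "M = \<Inter>\<CC>"
  have topV: "topspace X \<in> \<VV>" unfolding \<VV>_def using y by auto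
  have CCne: "\<CC> \<noteq> {}" unfolding \<CC>_def using topV by blast
  have CVcl: "closedb S (CV V)" for V unfolding CV_def using closed_Int[OF cl_closed closed_basic] .
  have Mcl: "closedb S M" unfolding M_def using closed_Inter[OF CCne] CVcl unfolding \<CC>_def by blast
  have "\<exists>p. \<forall>C\<in>\<CC>. p \<in> C"
  proof (rule compact_dir[OF CCne])
    fix C assume "C \<in> \<CC>"
    then obtain V where V: "V \<in> \<VV>" "C = CV V" unfolding \<CC>_def by blast
    show "closedb S C" using V CVcl by simp
    obtain q where q: "q \<in> K" "BV V \<in> q" using psV[OF V(1)] by blast
    have "q \<in> betaCl S K" using q(1) cl_ext[OF Kb] by blast
    moreover have "q \<in> betaS S" using q(1) Kb by blast
    ultimately have "q \<in> CV V" unfolding CV_def using q(2) by blast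
    then show "C \<noteq> {}" using V by blast
  next
    fix C1 C2 assume "C1 \<in> \<CC>" "C2 \<in> \<CC>"
    then obtain V1 V2 where V: "V1 \<in> \<VV>" "V2 \<in> \<VV>" "C1 = CV V1" "C2 = CV V2" unfolding \<CC>_def by blast
    have V12: "V1 \<inter> V2 \<in> \<VV>" using V unfolding \<VV>_def by auto
    have "CV (V1 \<inter> V2) \<subseteq> C1 \<inter> C2"
    proof
      fix p assume p: "p \<in> CV (V1 \<inter> V2)"
      then have pK: "p \<in> betaCl S K" and pb: "p \<in> betaS S" and m: "BV (V1 \<inter> V2) \<in> p" unfolding CV_def by auto
      have up: "is_ultrafilter S p" using pb by (simp add: betaS_iff)
      have "BV V1 \<in> p" using uf_mono[OF up m, of "BV V1"] BVS unfolding BV_def by blast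
      moreover have "BV V2 \<in> p" using uf_mono[OF up m, of "BV V2"] BVS unfolding BV_def by blast
      ultimately show "p \<in> C1 \<inter> C2" unfolding V(3,4) CV_def using pK pb by blast
    qed
    then show "\<exists>C3\<in>\<CC>. C3 \<subseteq> C1 \<inter> C2" using V12 unfolding \<CC>_def by blast
  qed
  then have Mne: "M \<noteq> {}" unfolding M_def by blast
  have Mmem: "p \<in> M \<longleftrightarrow> p \<in> betaCl S K \<and> p \<in> betaS S \<and> (\<forall>V\<in>\<VV>. BV V \<in> p)" for p
  proof
    assume "p \<in> M"
    then have "p \<in> CV V" if "V \<in> \<VV>" for V using that unfolding M_def \<CC>_def by blast
    then show "p \<in> betaCl S K \<and> p \<in> betaS S \<and> (\<forall>V\<in>\<VV>. BV V \<in> p)" using topV unfolding CV_def by blast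
  next
    assume "p \<in> betaCl S K \<and> p \<in> betaS S \<and> (\<forall>V\<in>\<VV>. BV V \<in> p)"
    then have "p \<in> CV V" if "V \<in> \<VV>" for V using that unfolding CV_def by blast
    then show "p \<in> M" unfolding M_def \<CC>_def by blast
  qed
  have "semigrp S M" unfolding semigrp_def
  proof (intro ballI)
    fix p r assume p: "p \<in> M" and r: "r \<in> M"
    have pK: "p \<in> betaCl S K" and pb: "p \<in> betaS S" and pV: "\<forall>V\<in>\<VV>. BV V \<in> p" using p Mmem by blast+
    have rK: "r \<in> betaCl S K" and rb: "r \<in> betaS S" and rV: "\<forall>V\<in>\<VV>. BV V \<in> r" using r Mmem by blast+
    have up: "is_ultrafilter S p" and ur: "is_ultrafilter S r" using pb rb by (auto simp: betaS_iff)
    have "BV V \<in> p \<oplus> r" if V: "V \<in> \<VV>" for V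
    proof -
      have "BV V \<subseteq> {s\<in>S. lshift S s (BV V) \<in> r}"
      proof
        fix s assume s: "s \<in> BV V"
        then have sS: "s \<in> S" and sx: "T s x \<in> V" and sy: "T s y \<in> V" unfolding BV_def by auto
        define V' where "V' = {z \<in> topspace X. T s z \<in> V}"
        have "openin X V'" unfolding V'_def using openin_continuous_map_preimage[OF cont[OF sS]] V unfolding \<VV>_def by blast
        moreover have "y \<in> V'" unfolding V'_def using y sy by blast
        ultimately have "V' \<in> \<VV>" unfolding \<VV>_def by blast
        then have m: "BV V' \<in> r" using rV by blast
        have "BV V' \<subseteq> lshift S s (BV V)"
        proof
          fix t assume t: "t \<in> BV V'"
          then have tS: "t \<in> S" and tx: "T t x \<in> topspace X" "T s (T t x) \<in> V"
            and ty: "T t y \<in> topspace X" "T s (T t y) \<in> V" unfolding BV_def V'_def by auto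
          have "T (s + t) x \<in> V" using tx comp[OF sS tS x] by simp
          moreover have "T (s + t) y \<in> V" using ty comp[OF sS tS y] by simp
          moreover have "s + t \<in> S" using S_add[OF sS tS] .
          ultimately show "t \<in> lshift S s (BV V)" unfolding lshift_def BV_def using tS by blast
        qed
        then have "lshift S s (BV V) \<in> r" using uf_mono[OF ur m] lshift_sub by blast
        then show "s \<in> {s\<in>S. lshift S s (BV V) \<in> r}" using sS by blast
      qed
      moreover have "BV V \<in> p" using pV V by blast
      ultimately have "{s\<in>S. lshift S s (BV V) \<in> r} \<in> p" using uf_mono[OF up, of "BV V"] by blast
      then show ?thesis unfolding uplus_def using BVS by simp
    qed
    moreover have "p \<oplus> r \<in> betaCl S K" using clK_semigrp pK rK unfolding semigrp_def by blast
    moreover have "p \<oplus> r \<in> betaS S" using uplus_uf[OF pb rb] .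
    ultimately show "p \<oplus> r \<in> M" using Mmem by blast
  qed
  then obtain p where p: "p \<in> M" "p \<oplus> p = p" using ellis[OF Mcl Mne] by blast
  have pK: "p \<in> betaCl S K" and pb: "p \<in> betaS S" and pV: "\<forall>V\<in>\<VV>. BV V \<in> p" using p(1) Mmem by blast+
  have up: "is_ultrafilter S p" using pb by (simp add: betaS_iff)
  obtain V where V: "openin X V" "y \<in> V" "V \<subseteq> U" using U unfolding is_nbhd_def by blast
  have "BV V \<in> p" using pV V unfolding \<VV>_def by blast
  moreover have "BV V \<subseteq> A" unfolding A BV_def using V(3) by blast
  moreover have "A \<subseteq> S" unfolding A by blast
  ultimately have "A \<in> p" using uf_mono[OF up, of "BV V" A] by blast
  then show ?thesis unfolding quasi_central_near_zero_def using pK p(2) by blast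
qed

end


context dss begin

lemma qc_to_dyn:
  assumes qc: "quasi_central_near_zero S A" and AS: "A \<subseteq> S"
  shows "\<exists>(X :: (real \<Rightarrow> bool) topology) T x y U.
              dynamical_system S X T \<and> x \<in> topspace X \<and> y \<in> topspace X \<and>
              JIUR0 S X T x y \<and> is_nbhd X U y \<and> A = {s\<in>S. T s x \<in> U}"
proof -
  obtain p where pK: "p \<in> betaCl S K" and pp: "p \<oplus> p = p" and Ap: "A \<in> p"
    using qc unfolding quasi_central_near_zero_def by blast
  have pb: "p \<in> betaS S" using pK cl_sub by blast
  have up: "is_ultrafilter S p" using pb by (simp add: betaS_iff)
  define X :: "(real \<Rightarrow> bool) topology" where "X = product_topology (\<lambda>_. discrete_topology UNIV) UNIV"
  define T :: "real \<Rightarrow> (real \<Rightarrow> bool) \<Rightarrow> (real \<Rightarrow> bool)" where "T s f = (\<lambda>t. f (s + t))" for s f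
  define x :: "real \<Rightarrow> bool" where "x t = (t \<in> A)" for t
  define y :: "real \<Rightarrow> bool" where "y t = ({s\<in>S. s + t \<in> A} \<in> p)" for t
  define U :: "(real \<Rightarrow> bool) set" where "U = {f. f 0}"
  have top: "topspace X = UNIV" unfolding X_def by simp
  have proj: "continuous_map X (discrete_topology UNIV) (\<lambda>f. f i)" for i
    unfolding X_def by (rule continuous_map_product_projection) simp
  have c1: "compact_space X" unfolding X_def by (simp add: compact_space_product_topology compact_space_discrete_topology)
  have c2: "Hausdorff_space X" unfolding X_def by (simp add: Hausdorff_space_product_topology)
  have c3: "continuous_map X X (T s)" for s
  proof -
    have "continuous_map X (discrete_topology UNIV) (\<lambda>f. T s f k)" for k unfolding T_def using proj by simp
    then show ?thesis unfolding X_def continuous_map_componentwise_UNIV by simp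
  qed
  have c4: "T s (T t z) = T (s + t) z" for s t z unfolding T_def by (simp add: algebra_simps)
  have dyn: "dynamical_system S X T" unfolding dynamical_system_def using c1 c2 c3 c4 by blast
  have yU: "y \<in> U" unfolding U_def y_def using Ap AS by (simp add: Collect_conj_eq inf.absorb2 subset_eq)
  have Uopen: "openin X U"
  proof -
    have "openin X {f \<in> topspace X. f 0 \<in> {True}}" by (rule openin_continuous_map_preimage[OF proj[of 0]]) simp
    moreover have "{f \<in> topspace X. f 0 \<in> {True}} = U" unfolding U_def top by auto
    ultimately show ?thesis by simp
  qed
  have nbU: "is_nbhd X U y" unfolding is_nbhd_def using yU Uopen top by blast
  have AU: "A = {s\<in>S. T s x \<in> U}" unfolding U_def T_def x_def using AS by auto
  have JI: "JIUR0 S X T x y" unfolding JIUR0_def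
  proof (intro allI impI)
    fix W assume W: "is_nbhd X W y"
    then obtain V where V: "openin X V" "y \<in> V" "V \<subseteq> W" unfolding is_nbhd_def by blast
    obtain Us where Us: "y \<in> (\<Pi>\<^sub>E i\<in>UNIV. Us i)" "finite {i. Us i \<noteq> topspace (discrete_topology (UNIV::bool set))}"
      "(\<Pi>\<^sub>E i\<in>UNIV. Us i) \<subseteq> V"
      using product_topology_open_contains_basis[OF V(1)[unfolded X_def] V(2)] by blast
    define J where "J = {i. Us i \<noteq> UNIV}"
    have fJ: "finite J" using Us(2) unfolding J_def by simp
    have inV: "f \<in> V" if f: "\<forall>i\<in>J. f i = y i" for f
    proof -
      have "f \<in> (\<Pi>\<^sub>E i\<in>UNIV. Us i)"
      proof (simp add: PiE_iff, intro allI)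
        fix i show "f i \<in> Us i"
        proof (cases "i \<in> J")
          case True then show ?thesis using f Us(1) by (simp add: PiE_iff)
        next
          case False then show ?thesis unfolding J_def by simp
        qed
      qed
      then show ?thesis using Us(3) by blast
    qed
    define Ei where "Ei i = {u\<in>S. u + i \<in> A}" for i
    have EiS: "Ei i \<subseteq> S" for i unfolding Ei_def by blast
    have yi: "y i = (Ei i \<in> p)" for i unfolding y_def Ei_def by simp
    have ysi: "y (s + i) = (lshift S s (Ei i) \<in> p)" if s: "s \<in> S" for s i
    proof -
      have "{u\<in>S. u + (s + i) \<in> A} = lshift S s (Ei i)"
        unfolding lshift_def Ei_def using s S_add by (auto simp: algebra_simps)
      then show ?thesis unfolding y_def by simp
    qed
    have idem: "Ei i \<in> p \<longleftrightarrow> {s\<in>S. lshift S s (Ei i) \<in> p} \<in> p" for i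
    proof -
      have "Ei i \<in> p \<longleftrightarrow> Ei i \<in> p \<oplus> p" using pp by simp
      also have "\<dots> \<longleftrightarrow> {s\<in>S. lshift S s (Ei i) \<in> p} \<in> p" unfolding uplus_def using EiS by simp
      finally show ?thesis .
    qed
    define E where "E i = {s\<in>S. (s + i \<in> A) = y i} \<inter> {s\<in>S. y (s + i) = y i}" for i
    have Ep: "E i \<in> p" for i
    proof (cases "y i")
      case True
      then have e1: "{s\<in>S. (s + i \<in> A) = y i} = Ei i" unfolding Ei_def by auto
      have e2: "{s\<in>S. y (s + i) = y i} = {s\<in>S. lshift S s (Ei i) \<in> p}" using True ysi by auto
      have "Ei i \<in> p" using True yi by simp
      moreover then have "{s\<in>S. lshift S s (Ei i) \<in> p} \<in> p" using idem by blast
      ultimately show ?thesis unfolding E_def e1 e2 using uf_int[OF up] by blast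
    next
      case False
      then have e1: "{s\<in>S. (s + i \<in> A) = y i} = S - Ei i" unfolding Ei_def by auto
      have e2: "{s\<in>S. y (s + i) = y i} = S - {s\<in>S. lshift S s (Ei i) \<in> p}" using False ysi by auto
      have n1: "Ei i \<notin> p" using False yi by simp
      then have n2: "{s\<in>S. lshift S s (Ei i) \<in> p} \<notin> p" using idem by blast
      have "S - Ei i \<in> p" using n1 uf_compl[OF up EiS] by blast
      moreover have "S - {s\<in>S. lshift S s (Ei i) \<in> p} \<in> p" using n2 uf_compl[OF up, of "{s\<in>S. lshift S s (Ei i) \<in> p}"] by blast
      ultimately show ?thesis unfolding E_def e1 e2 using uf_int[OF up] by blast
    qed
    have inter: "S \<inter> (\<Inter>i\<in>J. E i) \<in> p" using uf_Inter[OF fJ up] Ep by blast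
    define B where "B = {s\<in>S. T s x \<in> W \<and> T s y \<in> W}"
    have "S \<inter> (\<Inter>i\<in>J. E i) \<subseteq> B"
    proof
      fix s assume s: "s \<in> S \<inter> (\<Inter>i\<in>J. E i)"
      then have sS: "s \<in> S" by blast
      have "\<forall>i\<in>J. T s x i = y i" using s unfolding E_def T_def x_def by auto
      then have "T s x \<in> V" using inV by blast
      moreover have "\<forall>i\<in>J. T s y i = y i" using s unfolding E_def T_def by auto
      then have "T s y \<in> V" using inV by blast
      ultimately show "s \<in> B" unfolding B_def using sS V(3) by blast
    qed
    then have Bp: "B \<in> p" using uf_mono[OF up inter] unfolding B_def by blast
    then obtain q where q: "q \<in> K" "B \<in> q" using pK unfolding cl_iff by blast
    show "piecewise_syndetic_near_zero S {s\<in>S. T s x \<in> W \<and> T s y \<in> W}"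
      using PS_from_K[OF q] unfolding B_def .
  qed
  show ?thesis
    apply (rule exI[of _ X], rule exI[of _ T], rule exI[of _ x], rule exI[of _ y], rule exI[of _ U])
    using dyn top JI nbU AU by simp
qed

end

theorem theorem3p6:
  fixes S A :: "real set"
  assumes "dense_subsemigroup S" and "A \<subseteq> S"
  shows "(quasi_central_near_zero S A \<longleftrightarrow>
           (\<exists>(X :: (real \<Rightarrow> bool) topology) T x y U.
              dynamical_system S X T \<and> x \<in> topspace X \<and> y \<in> topspace X \<and>
              JIUR0 S X T x y \<and> is_nbhd X U y \<and> A = {s\<in>S. T s x \<in> U}))
       \<and> (\<forall>(X :: 'a topology) T x y U.
              dynamical_system S X T \<and> x \<in> topspace X \<and> y \<in> topspace X \<and>
              JIUR0 S X T x y \<and> is_nbhd X U y \<and> A = {s\<in>S. T s x \<in> U}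
              \<longrightarrow> quasi_central_near_zero S A)"
proof -
  interpret dss S using assms(1) by unfold_locales
  show ?thesis
    apply (intro conjI iffI allI impI)
      apply (erule qc_to_dyn[OF _ assms(2)])
     apply (elim exE conjE)
     apply (rule dyn_to_qc; assumption)
    apply (elim conjE)
    apply (rule dyn_to_qc; assumption)
    done
qed


end
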